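(* The functor $\text{Ab}_{\text{sT}}:\text{sTCom}\to\text{sAbGrp}$ is left adjoint to the functor $\text{U}_{\text{sT}}:\text{sAbGrp}\to\text{sTCom}$.
   Context: A simplicial $T$-complex is a simplicial set $X$ with a set of marked ("thin") simplices such that: (1) every degenerate simplex is thin; (2) for every horn $h:\Lambda^n_k\to X$ there is a unique filler $\text{fill}(h):\Delta^n\to X$ whose nondegenerate $n$-simplex is thin; (3) if all nondegenerate $(n-1)$-simplices of a horn are thin, then the $k$-th face of its thin filler is thin. Morphisms (forming $\text{sTCom}$) are simplicial maps preserving thin simplices. $\text{sAbGrp}$ is the category of simplicial abelian groups. For $A\in\text{sAbGrp}$, $\text{U}_{\text{sT}}(A)$ is the underlying simplicial set of $A$ with thin simplices the sums of degenerate simplices (this is a simplicial $T$-complex). For $X\in\text{sTCom}$, let $\eta:X\to\mathbb{Z}[X]$ be the canonical map to the free simplicial abelian group; then $\text{Ab}_{\text{sT}}(X)$ is the quotient of $\mathbb{Z}[X]$ by the simplicial subgroup generated by the elements $\text{fill}(\eta\circ h)-\eta\circ\text{fill}(h)$ for all horns $h:\Lambda^n_k\to X$, where $\text{fill}(\eta\circ h)$ is the thin filler of $\eta\circ h$ in $\text{U}_{\text{sT}}(\mathbb{Z}[X])$ and $\text{fill}(h)$ the thin filler of $h$ in $X$. *)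

theory Defs
  imports "HOL-Algebra.Algebra"
begin

text \<open>Convention: face n i maps level Suc n to level n (i \<le> Suc n);
  degen n i maps level n to level Suc n (i \<le> n).\<close>

definition is_sset :: "(nat \<Rightarrow> 'a set) \<Rightarrow> (nat \<Rightarrow> nat \<Rightarrow> 'a \<Rightarrow> 'a) \<Rightarrow> (nat \<Rightarrow> nat \<Rightarrow> 'a \<Rightarrow> 'a) \<Rightarrow> bool" where
  "is_sset S d s \<longleftrightarrow>
     (\<forall>n i x. i \<le> Suc n \<longrightarrow> x \<in> S (Suc n) \<longrightarrow> d n i x \<in> S n) \<and>
     (\<forall>n i x. i \<le> n \<longrightarrow> x \<in> S n \<longrightarrow> s n i x \<in> S (Suc n)) \<and>
     (\<forall>n i j x. i < j \<longrightarrow> j \<le> Suc (Suc n) \<longrightarrow> x \<in> S (Suc (Suc n)) \<longrightarrow>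
        d n i (d (Suc n) j x) = d n (j - 1) (d (Suc n) i x)) \<and>
     (\<forall>n i j x. i < j \<longrightarrow> j \<le> Suc n \<longrightarrow> x \<in> S (Suc n) \<longrightarrow>
        d (Suc n) i (s (Suc n) j x) = s n (j - 1) (d n i x)) \<and>
     (\<forall>n j x. j \<le> n \<longrightarrow> x \<in> S n \<longrightarrow> d n j (s n j x) = x \<and> d n (Suc j) (s n j x) = x) \<and>
     (\<forall>n i j x. j \<le> n \<longrightarrow> Suc j < i \<longrightarrow> i \<le> Suc (Suc n) \<longrightarrow> x \<in> S (Suc n) \<longrightarrow>
        d (Suc n) i (s (Suc n) j x) = s n j (d n (i - 1) x)) \<and>
     (\<forall>n i j x. i \<le> j \<longrightarrow> j \<le> n \<longrightarrow> x \<in> S n \<longrightarrow>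
        s (Suc n) i (s n j x) = s (Suc n) (Suc j) (s n i x))"

definition is_smap :: "(nat \<Rightarrow> 'a set) \<Rightarrow> (nat \<Rightarrow> nat \<Rightarrow> 'a \<Rightarrow> 'a) \<Rightarrow> (nat \<Rightarrow> nat \<Rightarrow> 'a \<Rightarrow> 'a) \<Rightarrow>
    (nat \<Rightarrow> 'b set) \<Rightarrow> (nat \<Rightarrow> nat \<Rightarrow> 'b \<Rightarrow> 'b) \<Rightarrow> (nat \<Rightarrow> nat \<Rightarrow> 'b \<Rightarrow> 'b) \<Rightarrow>
    (nat \<Rightarrow> 'a \<Rightarrow> 'b) \<Rightarrow> bool" where
  "is_smap S d s S' d' s' f \<longleftrightarrow>
     (\<forall>n. \<forall>x\<in>S n. f n x \<in> S' n) \<and>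
     (\<forall>n i x. i \<le> Suc n \<longrightarrow> x \<in> S (Suc n) \<longrightarrow> f n (d n i x) = d' n i (f (Suc n) x)) \<and>
     (\<forall>n i x. i \<le> n \<longrightarrow> x \<in> S n \<longrightarrow> f (Suc n) (s n i x) = s' n i (f n x))"

record 'a tcx =
  simp :: "nat \<Rightarrow> 'a set"
  face :: "nat \<Rightarrow> nat \<Rightarrow> 'a \<Rightarrow> 'a"
  degen :: "nat \<Rightarrow> nat \<Rightarrow> 'a \<Rightarrow> 'a"
  thin :: "nat \<Rightarrow> 'a set"

definition degenerate :: "'a tcx \<Rightarrow> nat \<Rightarrow> 'a \<Rightarrow> bool" where
  "degenerate K n x \<longleftrightarrow> (\<exists>m i y. n = Suc m \<and> i \<le> m \<and> y \<in> simp K m \<and> x = degen K m i y)"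

text \<open>A horn \<open>\<Lambda>^(Suc m)_k \<rightarrow> K\<close>, given (Yoneda) by its compatible family of
  m-simplices h i, i \<le> Suc m, i \<noteq> k.\<close>
definition is_horn :: "'a tcx \<Rightarrow> nat \<Rightarrow> nat \<Rightarrow> (nat \<Rightarrow> 'a) \<Rightarrow> bool" where
  "is_horn K m k h \<longleftrightarrow> k \<le> Suc m \<and>
     (\<forall>i \<le> Suc m. i \<noteq> k \<longrightarrow> h i \<in> simp K m) \<and>
     (\<forall>p i j. m = Suc p \<longrightarrow> i < j \<longrightarrow> j \<le> Suc m \<longrightarrow> i \<noteq> k \<longrightarrow> j \<noteq> k \<longrightarrow>
        face K p i (h j) = face K p (j - 1) (h i))"

definition is_filler :: "'a tcx \<Rightarrow> nat \<Rightarrow> nat \<Rightarrow> (nat \<Rightarrow> 'a) \<Rightarrow> 'a \<Rightarrow> bool" where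
  "is_filler K m k h x \<longleftrightarrow> x \<in> simp K (Suc m) \<and> (\<forall>i \<le> Suc m. i \<noteq> k \<longrightarrow> face K m i x = h i)"

definition fill :: "'a tcx \<Rightarrow> nat \<Rightarrow> nat \<Rightarrow> (nat \<Rightarrow> 'a) \<Rightarrow> 'a" where
  "fill K m k h = (THE x. is_filler K m k h x \<and> x \<in> thin K (Suc m))"

definition is_sTCom :: "'a tcx \<Rightarrow> bool" where
  "is_sTCom K \<longleftrightarrow> is_sset (simp K) (face K) (degen K) \<and>
     (\<forall>n. thin K n \<subseteq> simp K n) \<and> thin K 0 = {} \<and>
     (\<forall>n x. x \<in> simp K n \<longrightarrow> degenerate K n x \<longrightarrow> x \<in> thin K n) \<and>
     (\<forall>m k h. is_horn K m k h \<longrightarrow> (\<exists>!x. is_filler K m k h x \<and> x \<in> thin K (Suc m))) \<and>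
     (\<forall>m k h. is_horn K m k h \<longrightarrow>
        (\<forall>i \<le> Suc m. i \<noteq> k \<longrightarrow> \<not> degenerate K m (h i) \<longrightarrow> h i \<in> thin K m) \<longrightarrow>
        face K m k (fill K m k h) \<in> thin K m)"

definition sTCom_hom :: "'a tcx \<Rightarrow> 'b tcx \<Rightarrow> (nat \<Rightarrow> 'a \<Rightarrow> 'b) \<Rightarrow> bool" where
  "sTCom_hom K Y f \<longleftrightarrow> is_smap (simp K) (face K) (degen K) (simp Y) (face Y) (degen Y) f \<and>
     (\<forall>n. \<forall>x \<in> thin K n. f n x \<in> thin Y n)"

record 'a sab =
  lvl :: "nat \<Rightarrow> 'a monoid"
  sface :: "nat \<Rightarrow> nat \<Rightarrow> 'a \<Rightarrow> 'a"
  sdegen :: "nat \<Rightarrow> nat \<Rightarrow> 'a \<Rightarrow> 'a"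

definition is_sAbGrp :: "'a sab \<Rightarrow> bool" where
  "is_sAbGrp A \<longleftrightarrow> is_sset (\<lambda>n. carrier (lvl A n)) (sface A) (sdegen A) \<and>
     (\<forall>n. comm_group (lvl A n)) \<and>
     (\<forall>n i. i \<le> Suc n \<longrightarrow> sface A n i \<in> hom (lvl A (Suc n)) (lvl A n)) \<and>
     (\<forall>n i. i \<le> n \<longrightarrow> sdegen A n i \<in> hom (lvl A n) (lvl A (Suc n)))"

definition sAb_hom :: "'a sab \<Rightarrow> 'b sab \<Rightarrow> (nat \<Rightarrow> 'a \<Rightarrow> 'b) \<Rightarrow> bool" where
  "sAb_hom A B g \<longleftrightarrow>
     is_smap (\<lambda>n. carrier (lvl A n)) (sface A) (sdegen A) (\<lambda>n. carrier (lvl B n)) (sface B) (sdegen B) g \<and>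
     (\<forall>n. g n \<in> hom (lvl A n) (lvl B n))"

text \<open>Thin simplices of U_sT(A): (finite, nonempty) sums of degenerate simplices.
  In level 0 there are no degenerate simplices, hence no thin ones.\<close>
inductive_set degen_sums :: "'a sab \<Rightarrow> nat \<Rightarrow> 'a set" for A :: "'a sab" and n :: nat where
  degen: "n = Suc m \<Longrightarrow> i \<le> m \<Longrightarrow> x \<in> carrier (lvl A m) \<Longrightarrow> sdegen A m i x \<in> degen_sums A n"
| plus: "a \<in> degen_sums A n \<Longrightarrow> b \<in> degen_sums A n \<Longrightarrow> a \<otimes>\<^bsub>lvl A n\<^esub> b \<in> degen_sums A n"

definition U_sT :: "'a sab \<Rightarrow> 'a tcx" where
  "U_sT A = \<lparr>simp = (\<lambda>n. carrier (lvl A n)), face = sface A, degen = sdegen A,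
             thin = degen_sums A\<rparr>"

definition ZX_lvl :: "'a tcx \<Rightarrow> nat \<Rightarrow> ('a \<Rightarrow> int) monoid" where
  "ZX_lvl K n = \<lparr>carrier = {c. finite {x. c x \<noteq> 0} \<and> {x. c x \<noteq> 0} \<subseteq> simp K n},
                 monoid.mult = (\<lambda>c d x. c x + d x), monoid.one = (\<lambda>x. 0)\<rparr>"

definition lin :: "('a \<Rightarrow> 'a) \<Rightarrow> ('a \<Rightarrow> int) \<Rightarrow> ('a \<Rightarrow> int)" where
  "lin f c = (\<lambda>y. \<Sum>x \<in> {x. c x \<noteq> 0 \<and> f x = y}. c x)"

definition ZX :: "'a tcx \<Rightarrow> ('a \<Rightarrow> int) sab" where
  "ZX K = \<lparr>lvl = ZX_lvl K, sface = (\<lambda>n i. lin (face K n i)), sdegen = (\<lambda>n i. lin (degen K n i))\<rparr>"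

definition eta :: "'a \<Rightarrow> ('a \<Rightarrow> int)" where
  "eta x = (\<lambda>y. if y = x then 1 else 0)"

definition relgen :: "'a tcx \<Rightarrow> nat \<Rightarrow> ('a \<Rightarrow> int) set" where
  "relgen K n = {c. \<exists>m k h. n = Suc m \<and> is_horn K m k h \<and>
      c = (\<lambda>y. fill (U_sT (ZX K)) m k (\<lambda>i. eta (h i)) y - eta (fill K m k h) y)}"

definition Nsub :: "'a tcx \<Rightarrow> nat \<Rightarrow> ('a \<Rightarrow> int) set" where
  "Nsub K n = \<Inter> {S n | S. (\<forall>p. subgroup (S p) (ZX_lvl K p)) \<and>
      (\<forall>p i c. i \<le> Suc p \<longrightarrow> c \<in> S (Suc p) \<longrightarrow> sface (ZX K) p i c \<in> S p) \<and>
      (\<forall>p i c. i \<le> p \<longrightarrow> c \<in> S p \<longrightarrow> sdegen (ZX K) p i c \<in> S (Suc p)) \<and>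
      (\<forall>p. relgen K p \<subseteq> S p)}"

definition Ab_sT :: "'a tcx \<Rightarrow> ('a \<Rightarrow> int) set sab" where
  "Ab_sT K = \<lparr>lvl = (\<lambda>n. ZX_lvl K n Mod Nsub K n),
     sface = (\<lambda>n i C. Nsub K n #>\<^bsub>ZX_lvl K n\<^esub> sface (ZX K) n i (SOME c. c \<in> C)),
     sdegen = (\<lambda>n i C. Nsub K (Suc n) #>\<^bsub>ZX_lvl K (Suc n)\<^esub> sdegen (ZX K) n i (SOME c. c \<in> C))\<rparr>"

definition ab_unit :: "'a tcx \<Rightarrow> nat \<Rightarrow> 'a \<Rightarrow> ('a \<Rightarrow> int) set" where
  "ab_unit K n x = Nsub K n #>\<^bsub>ZX_lvl K n\<^esub> eta x"

end

theory Submission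
  imports Defs
begin

locale sAG =
  fixes A :: "'c sab"
  assumes sAG: "is_sAbGrp A"
begin

abbreviation "G n \<equiv> lvl A n"
abbreviation "d \<equiv> sface A"
abbreviation "s \<equiv> sdegen A"

lemma grp: "comm_group (G n)"
  using sAG by (simp add: is_sAbGrp_def)

lemma grp': "group (G n)"
  using grp by (simp add: comm_group_def)

lemma inv_c[simp]: "x \<in> carrier (G n) \<Longrightarrow> inv\<^bsub>G n\<^esub> x \<in> carrier (G n)"
  by (rule group.inv_closed[OF grp'])

lemma mult_c[simp]: "x \<in> carrier (G n) \<Longrightarrow> y \<in> carrier (G n) \<Longrightarrow> x \<otimes>\<^bsub>G n\<^esub> y \<in> carrier (G n)"
  by (rule monoid.m_closed[OF group.is_monoid[OF grp']])

lemma one_c[simp]: "\<one>\<^bsub>G n\<^esub> \<in> carrier (G n)"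
  by (rule monoid.one_closed[OF group.is_monoid[OF grp']])

lemma l_inv_G[simp]: "x \<in> carrier (G n) \<Longrightarrow> inv\<^bsub>G n\<^esub> x \<otimes>\<^bsub>G n\<^esub> x = \<one>\<^bsub>G n\<^esub>"
  by (rule group.l_inv[OF grp'])

lemma r_inv_G[simp]: "x \<in> carrier (G n) \<Longrightarrow> x \<otimes>\<^bsub>G n\<^esub> inv\<^bsub>G n\<^esub> x = \<one>\<^bsub>G n\<^esub>"
  by (rule group.r_inv[OF grp'])

lemma r_one_G[simp]: "x \<in> carrier (G n) \<Longrightarrow> x \<otimes>\<^bsub>G n\<^esub> \<one>\<^bsub>G n\<^esub> = x"
  by (rule monoid.r_one[OF group.is_monoid[OF grp']])

lemma l_one_G[simp]: "x \<in> carrier (G n) \<Longrightarrow> \<one>\<^bsub>G n\<^esub> \<otimes>\<^bsub>G n\<^esub> x = x"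
  by (rule monoid.l_one[OF group.is_monoid[OF grp']])

lemma d_hom: "i \<le> Suc n \<Longrightarrow> d n i \<in> hom (G (Suc n)) (G n)"
  using sAG by (simp add: is_sAbGrp_def)

lemma s_hom: "i \<le> n \<Longrightarrow> s n i \<in> hom (G n) (G (Suc n))"
  using sAG by (simp add: is_sAbGrp_def)

lemma dc[intro,simp]: "i \<le> Suc n \<Longrightarrow> x \<in> carrier (G (Suc n)) \<Longrightarrow> d n i x \<in> carrier (G n)"
  by (rule hom_in_carrier[OF d_hom])

lemma sc[intro,simp]: "i \<le> n \<Longrightarrow> x \<in> carrier (G n) \<Longrightarrow> s n i x \<in> carrier (G (Suc n))"
  by (rule hom_in_carrier[OF s_hom])

lemma d_mult: "i \<le> Suc n \<Longrightarrow> x \<in> carrier (G (Suc n)) \<Longrightarrow> y \<in> carrier (G (Suc n)) \<Longrightarrow>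
   d n i (x \<otimes>\<^bsub>G (Suc n)\<^esub> y) = d n i x \<otimes>\<^bsub>G n\<^esub> d n i y"
  by (rule hom_mult[OF d_hom])

lemma s_mult: "i \<le> n \<Longrightarrow> x \<in> carrier (G n) \<Longrightarrow> y \<in> carrier (G n) \<Longrightarrow>
   s n i (x \<otimes>\<^bsub>G n\<^esub> y) = s n i x \<otimes>\<^bsub>G (Suc n)\<^esub> s n i y"
  by (rule hom_mult[OF s_hom])

lemma d_one: "i \<le> Suc n \<Longrightarrow> d n i \<one>\<^bsub>G (Suc n)\<^esub> = \<one>\<^bsub>G n\<^esub>"
  using d_hom grp' by (simp add: hom_one)

lemma s_one: "i \<le> n \<Longrightarrow> s n i \<one>\<^bsub>G n\<^esub> = \<one>\<^bsub>G (Suc n)\<^esub>"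
  using s_hom grp' by (simp add: hom_one)

lemma d_inv: "i \<le> Suc n \<Longrightarrow> x \<in> carrier (G (Suc n)) \<Longrightarrow> d n i (inv\<^bsub>G (Suc n)\<^esub> x) = inv\<^bsub>G n\<^esub> d n i x"
  using d_hom grp' by (simp add: group_hom.hom_inv group_hom_axioms.intro group_hom_def)

lemma s_inv: "i \<le> n \<Longrightarrow> x \<in> carrier (G n) \<Longrightarrow> s n i (inv\<^bsub>G n\<^esub> x) = inv\<^bsub>G (Suc n)\<^esub> s n i x"
  using s_hom grp' by (simp add: group_hom.hom_inv group_hom_axioms.intro group_hom_def)

lemma sset: "is_sset (\<lambda>n. carrier (G n)) d s"
  using sAG by (simp add: is_sAbGrp_def)

lemma idA: "i < j \<Longrightarrow> j \<le> Suc (Suc n) \<Longrightarrow> x \<in> carrier (G (Suc (Suc n))) \<Longrightarrow>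
        d n i (d (Suc n) j x) = d n (j - 1) (d (Suc n) i x)"
  by (rule sset[unfolded is_sset_def, THEN conjunct2, THEN conjunct2, THEN conjunct1, rule_format])

lemma idB: "i < j \<Longrightarrow> j \<le> Suc n \<Longrightarrow> x \<in> carrier (G (Suc n)) \<Longrightarrow>
        d (Suc n) i (s (Suc n) j x) = s n (j - 1) (d n i x)"
  by (rule sset[unfolded is_sset_def, THEN conjunct2, THEN conjunct2, THEN conjunct2, THEN conjunct1, rule_format])

lemma idC1: "j \<le> n \<Longrightarrow> x \<in> carrier (G n) \<Longrightarrow> d n j (s n j x) = x"
  by (rule sset[unfolded is_sset_def, THEN conjunct2, THEN conjunct2, THEN conjunct2, THEN conjunct2, THEN conjunct1, rule_format, THEN conjunct1])

lemma idC2: "j \<le> n \<Longrightarrow> x \<in> carrier (G n) \<Longrightarrow> d n (Suc j) (s n j x) = x"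
  by (rule sset[unfolded is_sset_def, THEN conjunct2, THEN conjunct2, THEN conjunct2, THEN conjunct2, THEN conjunct1, rule_format, THEN conjunct2])

lemma idD: "j \<le> n \<Longrightarrow> Suc j < i \<Longrightarrow> i \<le> Suc (Suc n) \<Longrightarrow> x \<in> carrier (G (Suc n)) \<Longrightarrow>
        d (Suc n) i (s (Suc n) j x) = s n j (d n (i - 1) x)"
  by (rule sset[unfolded is_sset_def, THEN conjunct2, THEN conjunct2, THEN conjunct2, THEN conjunct2, THEN conjunct2, THEN conjunct1, rule_format])

lemma idE: "i \<le> j \<Longrightarrow> j \<le> n \<Longrightarrow> x \<in> carrier (G n) \<Longrightarrow>
        s (Suc n) i (s n j x) = s (Suc n) (Suc j) (s n i x)"
  by (rule sset[unfolded is_sset_def, THEN conjunct2, THEN conjunct2, THEN conjunct2, THEN conjunct2, THEN conjunct2, THEN conjunct2, rule_format])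

lemma ds_carrier: "x \<in> degen_sums A n \<Longrightarrow> x \<in> carrier (G n)"
proof (induction rule: degen_sums.induct)
  case (degen m i x)
  then show ?case by simp
next
  case (plus a b)
  then show ?case using grp' by (simp add: monoid.m_closed group.is_monoid)
qed

end

primrec Wf :: "'c sab \<Rightarrow> nat \<Rightarrow> (nat \<Rightarrow> 'c) \<Rightarrow> nat \<Rightarrow> 'c" where
  "Wf A m y 0 = \<one>\<^bsub>lvl A (Suc m)\<^esub>"
| "Wf A m y (Suc r) = Wf A m y r \<otimes>\<^bsub>lvl A (Suc m)\<^esub>
     sdegen A m r (inv\<^bsub>lvl A m\<^esub> (sface A m r (Wf A m y r)) \<otimes>\<^bsub>lvl A m\<^esub> y r)"

primrec Vf :: "'c sab \<Rightarrow> nat \<Rightarrow> nat \<Rightarrow> (nat \<Rightarrow> 'c) \<Rightarrow> nat \<Rightarrow> 'c" where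
  "Vf A m k y 0 = Wf A m y k"
| "Vf A m k y (Suc t) = Vf A m k y t \<otimes>\<^bsub>lvl A (Suc m)\<^esub>
     sdegen A m (m - t) (inv\<^bsub>lvl A m\<^esub> (sface A m (Suc m - t) (Vf A m k y t)) \<otimes>\<^bsub>lvl A m\<^esub> y (Suc m - t))"

context sAG
begin

lemma Wf_prop:
  assumes k: "k \<le> Suc m"
    and y: "\<And>i. i \<le> Suc m \<Longrightarrow> i \<noteq> k \<Longrightarrow> y i \<in> carrier (G m)"
    and compat: "\<And>p i j. m = Suc p \<Longrightarrow> i < j \<Longrightarrow> j \<le> Suc m \<Longrightarrow> i \<noteq> k \<Longrightarrow> j \<noteq> k \<Longrightarrow>
        d p i (y j) = d p (j - 1) (y i)"
  shows "r \<le> k \<Longrightarrow> Wf A m y r \<in> degen_sums A (Suc m) \<and> (\<forall>i<r. d m i (Wf A m y r) = y i)"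
proof (induction r)
  case 0
  interpret Gm0: group "G m" by (rule grp')
  have "\<one>\<^bsub>G (Suc m)\<^esub> \<in> degen_sums A (Suc m)"
    using degen_sums.degen[of "Suc m" m 0 "\<one>\<^bsub>G m\<^esub>" A] s_one[of 0 m] grp' by simp
  then show ?case by simp
next
  case (Suc r)
  interpret Gm: comm_group "G m" by (rule grp)
  interpret GSm: comm_group "G (Suc m)" by (rule grp)
  define w where "w = Wf A m y r"
  have IH: "w \<in> degen_sums A (Suc m)" "\<And>i. i < r \<Longrightarrow> d m i w = y i"
    using Suc w_def by auto
  have wc: "w \<in> carrier (G (Suc m))" using IH ds_carrier by blast
  have rm: "r \<le> m" using Suc k by simp
  have yr: "y r \<in> carrier (G m)" using y Suc k by simp
  define c where "c = inv\<^bsub>G m\<^esub> (d m r w) \<otimes>\<^bsub>G m\<^esub> y r"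
  have cc: "c \<in> carrier (G m)" using c_def wc yr rm by simp
  have eq: "Wf A m y (Suc r) = w \<otimes>\<^bsub>G (Suc m)\<^esub> s m r c" by (simp add: w_def c_def)
  have "w \<otimes>\<^bsub>G (Suc m)\<^esub> s m r c \<in> degen_sums A (Suc m)"
    by (rule degen_sums.plus[OF IH(1) degen_sums.degen[OF refl rm cc]])
  moreover have "d m i (w \<otimes>\<^bsub>G (Suc m)\<^esub> s m r c) = y i" if i: "i < Suc r" for i
  proof -
    have im: "i \<le> Suc m" using i rm by simp
    have e1: "d m i (w \<otimes>\<^bsub>G (Suc m)\<^esub> s m r c) = d m i w \<otimes>\<^bsub>G m\<^esub> d m i (s m r c)"
      using d_mult[OF im wc] rm cc by simp
    show ?thesis
    proof (cases "i = r")
      case True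
      then show ?thesis using e1 idC1[OF rm cc] c_def wc yr rm
        by (simp add: Gm.m_assoc[symmetric])
    next
      case False
      hence ir: "i < r" using i by simp
      then obtain p where p: "m = Suc p" using rm by (cases m) auto
      have wc': "w \<in> carrier (G (Suc (Suc p)))" using wc p by simp
      have rp: "r \<le> Suc p" using rm p by simp
      have cc': "c \<in> carrier (G (Suc p))" using cc p by simp
      have yr': "y r \<in> carrier (G (Suc p))" using yr p by simp
      have yi': "y i \<in> carrier (G (Suc p))" using y[of i] ir Suc k p by simp
      have "d (Suc p) i (s (Suc p) r c) = s p (r - 1) (d p i c)"
        by (rule idB[OF ir rp cc'])
      moreover have "d p i c = \<one>\<^bsub>G p\<^esub>"
      proof -
        have "d p i c = inv\<^bsub>G p\<^esub> (d p i (d (Suc p) r w)) \<otimes>\<^bsub>G p\<^esub> d p i (y r)"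
          unfolding c_def using p wc' rp ir yr'
          by (simp add: d_mult d_inv)
        also have "d p i (d (Suc p) r w) = d p (r - 1) (y i)"
          using idA[of i r p w] ir rp wc' IH(2)[OF ir] p by simp
        also have "d p i (y r) = d p (r - 1) (y i)"
          using compat[OF p ir] Suc k ir by simp
        finally show ?thesis
          using yi' ir rp by (simp add: group.l_inv[OF grp'])
      qed
      ultimately have "d m i (s m r c) = \<one>\<^bsub>G m\<^esub>"
        using p s_one[of "r - 1" p] rp by simp
      then show ?thesis using e1 IH(2)[OF ir] y[of i] ir Suc k by simp
    qed
  qed
  ultimately show ?case using eq by simp
qed


lemma Vf_prop:
  assumes k: "k \<le> Suc m"
    and y: "\<And>i. i \<le> Suc m \<Longrightarrow> i \<noteq> k \<Longrightarrow> y i \<in> carrier (G m)"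
    and compat: "\<And>p i j. m = Suc p \<Longrightarrow> i < j \<Longrightarrow> j \<le> Suc m \<Longrightarrow> i \<noteq> k \<Longrightarrow> j \<noteq> k \<Longrightarrow>
        d p i (y j) = d p (j - 1) (y i)"
  shows "t \<le> Suc m - k \<Longrightarrow> Vf A m k y t \<in> degen_sums A (Suc m) \<and>
     (\<forall>i \<le> Suc m. (i < k \<or> Suc m - t < i) \<longrightarrow> d m i (Vf A m k y t) = y i)"
proof (induction t)
  case 0
  then show ?case using Wf_prop[OF k y compat, of k] by auto
next
  case (Suc t)
  interpret Gm: comm_group "G m" by (rule grp)
  interpret GSm: comm_group "G (Suc m)" by (rule grp)
  define w where "w = Vf A m k y t"
  define r where "r = Suc m - t"
  have IH: "w \<in> degen_sums A (Suc m)" "\<And>i. i \<le> Suc m \<Longrightarrow> i < k \<or> r < i \<Longrightarrow> d m i w = y i"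
    using Suc w_def r_def by auto
  have wc: "w \<in> carrier (G (Suc m))" using IH ds_carrier by blast
  have kr: "k < r" "r \<le> Suc m" using Suc r_def by auto
  have r1: "m - t = r - 1" using r_def Suc by simp
  have rm: "r - 1 \<le> m" using kr by simp
  have yr: "y r \<in> carrier (G m)" using y kr by simp
  define c where "c = inv\<^bsub>G m\<^esub> (d m r w) \<otimes>\<^bsub>G m\<^esub> y r"
  have cc: "c \<in> carrier (G m)" using c_def wc yr kr by simp
  have eq: "Vf A m k y (Suc t) = w \<otimes>\<^bsub>G (Suc m)\<^esub> s m (r - 1) c"
    unfolding Vf.simps w_def[symmetric] r_def[symmetric] r1 c_def by (rule refl)
  have "w \<otimes>\<^bsub>G (Suc m)\<^esub> s m (r - 1) c \<in> degen_sums A (Suc m)"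
    by (rule degen_sums.plus[OF IH(1) degen_sums.degen[OF refl rm cc]])
  moreover have "d m i (w \<otimes>\<^bsub>G (Suc m)\<^esub> s m (r - 1) c) = y i"
    if i: "i \<le> Suc m" "i < k \<or> Suc m - Suc t < i" for i
  proof -
    have e1: "d m i (w \<otimes>\<^bsub>G (Suc m)\<^esub> s m (r - 1) c) = d m i w \<otimes>\<^bsub>G m\<^esub> d m i (s m (r - 1) c)"
      using d_mult[OF i(1) wc] rm cc by simp
    have ii: "i < k \<or> i = r \<or> r < i" using i r_def by auto
    show ?thesis
    proof (cases "i = r")
      case True
      have "d m r (s m (r - 1) c) = c" using idC2[OF rm cc] kr by simp
      then show ?thesis using e1 True c_def wc yr kr
        by (simp add: Gm.m_assoc[symmetric])
    next
      case False
      hence ii2: "i < k \<or> r < i" using ii by simp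
      have yi: "y i \<in> carrier (G m)" using y i ii2 kr by auto
      have "m \<noteq> 0" using ii2 kr i by auto
      then obtain p where p: "m = Suc p" by (cases m) auto
      have wc': "w \<in> carrier (G (Suc (Suc p)))" using wc p by simp
      have cc': "c \<in> carrier (G (Suc p))" using cc p by simp
      have yr': "y r \<in> carrier (G (Suc p))" using yr p by simp
      have yi': "y i \<in> carrier (G (Suc p))" using yi p by simp
      have rp: "r \<le> Suc (Suc p)" using kr p by simp
      have "d m i (s m (r - 1) c) = \<one>\<^bsub>G m\<^esub>"
      proof (cases "i < k")
        case True
        have ir: "i < r - 1" using True kr by simp
        have ir': "i < r" using ir by simp
        have "d (Suc p) i (s (Suc p) (r - 1) c) = s p (r - 1 - 1) (d p i c)"
          by (rule idB[OF ir _ cc']) (use rp in simp)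
        moreover have "d p i c = \<one>\<^bsub>G p\<^esub>"
        proof -
          have "d p i c = inv\<^bsub>G p\<^esub> (d p i (d (Suc p) r w)) \<otimes>\<^bsub>G p\<^esub> d p i (y r)"
            unfolding c_def using p wc' rp ir yr'
            by (simp add: d_mult d_inv)
          also have "d p i (d (Suc p) r w) = d p (r - 1) (y i)"
            using idA[OF ir' rp wc'] IH(2)[of i] True p i by simp
          also have "d p i (y r) = d p (r - 1) (y i)"
            using compat[OF p ir'] True kr by simp
          finally show ?thesis
            using yi' ir rp by (simp add: group.l_inv[OF grp'])
        qed
        ultimately show ?thesis
          using p s_one[of "r - 1 - 1" p] rp ir by simp
      next
        case False
        hence ri: "r < i" using ii2 by simp
        have "d (Suc p) i (s (Suc p) (r - 1) c) = s p (r - 1) (d p (i - 1) c)"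
          by (rule idD[OF _ _ _ cc']) (use ri rp i p kr in auto)
        moreover have "d p (i - 1) c = \<one>\<^bsub>G p\<^esub>"
        proof -
          have "d p (i - 1) c = inv\<^bsub>G p\<^esub> (d p (i - 1) (d (Suc p) r w)) \<otimes>\<^bsub>G p\<^esub> d p (i - 1) (y r)"
            unfolding c_def using p wc' rp ri i yr'
            by (simp add: d_mult d_inv)
          also have "d p (i - 1) (d (Suc p) r w) = d p r (y i)"
            using idA[OF ri _ wc'] IH(2)[of i] ri p i by simp
          also have "d p (i - 1) (y r) = d p r (y i)"
            using compat[OF p ri] ri kr i by simp
          finally show ?thesis
            using yi' ri i p by (simp add: group.l_inv[OF grp'])
        qed
        ultimately show ?thesis
          using p s_one[of "r - 1" p] rp ri i(1) by simp
      qed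
      then show ?thesis using e1 IH(2)[of i] i ii2 yi by simp
    qed
  qed
  ultimately show ?case using eq by simp
qed

lemma filler_exists:
  assumes k: "k \<le> Suc m"
    and y: "\<And>i. i \<le> Suc m \<Longrightarrow> i \<noteq> k \<Longrightarrow> y i \<in> carrier (G m)"
    and compat: "\<And>p i j. m = Suc p \<Longrightarrow> i < j \<Longrightarrow> j \<le> Suc m \<Longrightarrow> i \<noteq> k \<Longrightarrow> j \<noteq> k \<Longrightarrow>
        d p i (y j) = d p (j - 1) (y i)"
  shows "\<exists>x. x \<in> degen_sums A (Suc m) \<and> (\<forall>i \<le> Suc m. i \<noteq> k \<longrightarrow> d m i x = y i)"
proof -
  have "Vf A m k y (Suc m - k) \<in> degen_sums A (Suc m) \<and>
     (\<forall>i \<le> Suc m. (i < k \<or> Suc m - (Suc m - k) < i) \<longrightarrow> d m i (Vf A m k y (Suc m - k)) = y i)"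
    by (rule Vf_prop[OF k y compat]) auto
  moreover have "\<And>i. i \<noteq> k \<Longrightarrow> i < k \<or> Suc m - (Suc m - k) < i" using k by auto
  ultimately show ?thesis by blast
qed

end

definition Pf :: "'c sab \<Rightarrow> nat \<Rightarrow> nat \<Rightarrow> nat \<Rightarrow> 'c \<Rightarrow> 'c" where
  "Pf A m r j x = x \<otimes>\<^bsub>lvl A (Suc m)\<^esub> inv\<^bsub>lvl A (Suc m)\<^esub> (sdegen A m r (sface A m j x))"

primrec Ff :: "'c sab \<Rightarrow> nat \<Rightarrow> nat \<Rightarrow> 'c \<Rightarrow> 'c" where
  "Ff A m 0 x = x"
| "Ff A m (Suc r) x = Pf A m r r (Ff A m r x)"

primrec Gf :: "'c sab \<Rightarrow> nat \<Rightarrow> nat \<Rightarrow> 'c \<Rightarrow> 'c" where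
  "Gf A m 0 x = x"
| "Gf A m (Suc t) x = Pf A m (m - t) (Suc m - t) (Gf A m t x)"

definition Qf :: "'c sab \<Rightarrow> nat \<Rightarrow> nat \<Rightarrow> 'c \<Rightarrow> 'c" where
  "Qf A m k x = Gf A m (Suc m - k) (Ff A m k x)"

context sAG
begin

lemma P_c: "r \<le> m \<Longrightarrow> j \<le> Suc m \<Longrightarrow> x \<in> carrier (G (Suc m)) \<Longrightarrow> Pf A m r j x \<in> carrier (G (Suc m))"
  unfolding Pf_def by simp

lemma P_mult: "r \<le> m \<Longrightarrow> j \<le> Suc m \<Longrightarrow> x \<in> carrier (G (Suc m)) \<Longrightarrow> y \<in> carrier (G (Suc m)) \<Longrightarrow>
   Pf A m r j (x \<otimes>\<^bsub>G (Suc m)\<^esub> y) = Pf A m r j x \<otimes>\<^bsub>G (Suc m)\<^esub> Pf A m r j y"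
proof -
  assume a: "r \<le> m" "j \<le> Suc m" "x \<in> carrier (G (Suc m))" "y \<in> carrier (G (Suc m))"
  interpret GS: comm_group "G (Suc m)" by (rule grp)
  show ?thesis unfolding Pf_def using a
    by (simp add: d_mult s_mult GS.inv_mult GS.m_ac)
qed

lemma P_one: "r \<le> m \<Longrightarrow> j \<le> Suc m \<Longrightarrow> Pf A m r j \<one>\<^bsub>G (Suc m)\<^esub> = \<one>\<^bsub>G (Suc m)\<^esub>"
  unfolding Pf_def by (simp add: d_one s_one monoid.inv_one[OF group.is_monoid[OF grp']])

lemma P_fix: "r \<le> m \<Longrightarrow> j \<le> Suc m \<Longrightarrow> x \<in> carrier (G (Suc m)) \<Longrightarrow> d m j x = \<one>\<^bsub>G m\<^esub> \<Longrightarrow> Pf A m r j x = x"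
  unfolding Pf_def by (simp add: s_one monoid.inv_one[OF group.is_monoid[OF grp']])

lemma P_kill: "r \<le> m \<Longrightarrow> j \<le> Suc m \<Longrightarrow> x \<in> carrier (G m) \<Longrightarrow> d m j (s m r x) = x \<Longrightarrow> Pf A m r j (s m r x) = \<one>\<^bsub>G (Suc m)\<^esub>"
  unfolding Pf_def by simp

lemma F_c: "r \<le> Suc m \<Longrightarrow> x \<in> carrier (G (Suc m)) \<Longrightarrow> Ff A m r x \<in> carrier (G (Suc m))"
  by (induction r) (auto simp: P_c)

lemma F_mult: "r \<le> Suc m \<Longrightarrow> x \<in> carrier (G (Suc m)) \<Longrightarrow> y \<in> carrier (G (Suc m)) \<Longrightarrow>
   Ff A m r (x \<otimes>\<^bsub>G (Suc m)\<^esub> y) = Ff A m r x \<otimes>\<^bsub>G (Suc m)\<^esub> Ff A m r y"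
  by (induction r) (auto simp: P_mult F_c)

lemma F_one: "r \<le> Suc m \<Longrightarrow> Ff A m r \<one>\<^bsub>G (Suc m)\<^esub> = \<one>\<^bsub>G (Suc m)\<^esub>"
  by (induction r) (auto simp: P_one)

lemma F_fix: "r \<le> Suc m \<Longrightarrow> x \<in> carrier (G (Suc m)) \<Longrightarrow> (\<forall>i<r. d m i x = \<one>\<^bsub>G m\<^esub>) \<Longrightarrow> Ff A m r x = x"
  by (induction r) (auto simp: P_fix)

lemma G_c: "x \<in> carrier (G (Suc m)) \<Longrightarrow> Gf A m t x \<in> carrier (G (Suc m))"
  by (induction t) (auto simp: P_c)

lemma G_mult: "x \<in> carrier (G (Suc m)) \<Longrightarrow> y \<in> carrier (G (Suc m)) \<Longrightarrow>
   Gf A m t (x \<otimes>\<^bsub>G (Suc m)\<^esub> y) = Gf A m t x \<otimes>\<^bsub>G (Suc m)\<^esub> Gf A m t y"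
  by (induction t) (auto simp: P_mult G_c)

lemma G_one: "Gf A m t \<one>\<^bsub>G (Suc m)\<^esub> = \<one>\<^bsub>G (Suc m)\<^esub>"
  by (induction t) (auto simp: P_one)

lemma G_fix: "x \<in> carrier (G (Suc m)) \<Longrightarrow> (\<forall>t'<t. d m (Suc m - t') x = \<one>\<^bsub>G m\<^esub>) \<Longrightarrow> Gf A m t x = x"
  by (induction t) (auto simp: P_fix)

lemma F_comm: "r \<le> j \<Longrightarrow> j \<le> Suc p \<Longrightarrow> a \<in> carrier (G (Suc p)) \<Longrightarrow>
    Ff A (Suc p) r (s (Suc p) j a) = s (Suc p) j (Ff A p r a)"
proof (induction r)
  case 0
  then show ?case by simp
next
  case (Suc r)
  have rj: "r < j" using Suc by simp
  define b where "b = Ff A p r a"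
  have bc: "b \<in> carrier (G (Suc p))" using F_c Suc b_def by simp
  define e where "e = d p r b"
  have ec: "e \<in> carrier (G p)" using e_def bc rj Suc by simp
  have "Ff A (Suc p) (Suc r) (s (Suc p) j a) = Pf A (Suc p) r r (s (Suc p) j b)"
    using Suc b_def by simp
  also have "\<dots> = s (Suc p) j b \<otimes>\<^bsub>G (Suc (Suc p))\<^esub> inv\<^bsub>G (Suc (Suc p))\<^esub> (s (Suc p) r (s p (j - 1) e))"
    unfolding Pf_def e_def using idB[OF rj _ bc] Suc by simp
  also have "s (Suc p) r (s p (j - 1) e) = s (Suc p) j (s p r e)"
    using idE[of r "j - 1" p e] rj Suc ec by simp
  also have "s (Suc p) j b \<otimes>\<^bsub>G (Suc (Suc p))\<^esub> inv\<^bsub>G (Suc (Suc p))\<^esub> s (Suc p) j (s p r e)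
      = s (Suc p) j (b \<otimes>\<^bsub>G (Suc p)\<^esub> inv\<^bsub>G (Suc p)\<^esub> s p r e)"
    using Suc bc ec rj by (simp add: s_mult s_inv)
  also have "b \<otimes>\<^bsub>G (Suc p)\<^esub> inv\<^bsub>G (Suc p)\<^esub> s p r e = Ff A p (Suc r) a"
    by (simp add: Pf_def b_def e_def)
  finally show ?case .
qed

lemma F_kill: "r \<le> Suc m \<Longrightarrow> j < r \<Longrightarrow> a \<in> carrier (G m) \<Longrightarrow> Ff A m r (s m j a) = \<one>\<^bsub>G (Suc m)\<^esub>"
proof (induction r)
  case 0
  then show ?case by simp
next
  case (Suc r)
  show ?case
  proof (cases "j < r")
    case True
    then show ?thesis using Suc by (simp add: P_one)
  next
    case False
    hence jr: "j = r" using Suc by simp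
    have rm: "r \<le> m" using Suc by simp
    have "\<exists>b \<in> carrier (G m). Ff A m r (s m r a) = s m r b"
    proof (cases r)
      case 0
      then show ?thesis using Suc by auto
    next
      case (Suc r')
      then obtain p where p: "m = Suc p" using rm by (cases m) auto
      show ?thesis using F_comm[of r r p a] p rm Suc.prems F_c[of r p a] Suc
        by auto
    qed
    then obtain b where b: "b \<in> carrier (G m)" "Ff A m r (s m r a) = s m r b" by blast
    show ?thesis using jr b rm by (simp add: P_kill idC1)
  qed
qed

lemma G_comm: "j + t \<le> Suc p \<Longrightarrow> a \<in> carrier (G (Suc p)) \<Longrightarrow>
    Gf A (Suc p) t (s (Suc p) j a) = s (Suc p) j (Gf A p t a)"
proof (induction t)
  case 0
  then show ?case by simp
next
  case (Suc t)
  define b where "b = Gf A p t a"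
  have bc: "b \<in> carrier (G (Suc p))" using G_c Suc b_def by simp
  define r where "r = Suc (Suc p) - t"
  have r1: "Suc p - t = r - 1" "p - t = r - 2" using r_def Suc by auto
  have jr: "Suc j < r" "r \<le> Suc (Suc p)" "j \<le> p" using r_def Suc by auto
  define e where "e = d p (r - 1) b"
  have ec: "e \<in> carrier (G p)" using e_def bc jr by simp
  have "Gf A (Suc p) (Suc t) (s (Suc p) j a) = Pf A (Suc p) (r - 1) r (s (Suc p) j b)"
    using Suc b_def r_def by (simp add: numeral_2_eq_2)
  also have "\<dots> = s (Suc p) j b \<otimes>\<^bsub>G (Suc (Suc p))\<^esub> inv\<^bsub>G (Suc (Suc p))\<^esub> (s (Suc p) (r - 1) (s p j e))"
    unfolding Pf_def e_def using idD[OF jr(3) jr(1) jr(2) bc] by simp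
  also have "s (Suc p) (r - 1) (s p j e) = s (Suc p) j (s p (r - 2) e)"
  proof -
    obtain q where q: "r = Suc (Suc q)" using jr by (cases r; cases "r - 1") auto
    show ?thesis using idE[of j q p e] jr ec q by simp
  qed
  also have "s (Suc p) j b \<otimes>\<^bsub>G (Suc (Suc p))\<^esub> inv\<^bsub>G (Suc (Suc p))\<^esub> s (Suc p) j (s p (r - 2) e)
      = s (Suc p) j (b \<otimes>\<^bsub>G (Suc p)\<^esub> inv\<^bsub>G (Suc p)\<^esub> s p (r - 2) e)"
    using bc ec jr by (simp add: s_mult s_inv)
  also have "b \<otimes>\<^bsub>G (Suc p)\<^esub> inv\<^bsub>G (Suc p)\<^esub> s p (r - 2) e = Gf A p (Suc t) a"
    by (simp add: Pf_def b_def e_def r1)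
  finally show ?case .
qed

lemma G_kill: "m < j + t \<Longrightarrow> j \<le> m \<Longrightarrow> a \<in> carrier (G m) \<Longrightarrow> Gf A m t (s m j a) = \<one>\<^bsub>G (Suc m)\<^esub>"
proof (induction t)
  case 0
  then show ?case by simp
next
  case (Suc t)
  show ?case
  proof (cases "m < j + t")
    case True
    then show ?thesis using Suc by (simp add: P_one)
  next
    case False
    hence jt: "j + t = m" using Suc by simp
    have "\<exists>b \<in> carrier (G m). Gf A m t (s m j a) = s m j b"
    proof (cases t)
      case 0
      then show ?thesis using Suc by auto
    next
      case (Suc t')
      then obtain p where p: "m = Suc p" using jt by (cases m) auto
      show ?thesis using G_comm[of j t p a] p jt Suc.prems G_c[of a p t]
        by auto
    qed
    then obtain b where b: "b \<in> carrier (G m)" "Gf A m t (s m j a) = s m j b" by blast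
    have e: "m - t = j" "Suc m - t = Suc j" using jt by auto
    show ?thesis using b Suc.prems by (simp add: e P_kill idC2)
  qed
qed


lemma Q_c: "k \<le> Suc m \<Longrightarrow> x \<in> carrier (G (Suc m)) \<Longrightarrow> Qf A m k x \<in> carrier (G (Suc m))"
  unfolding Qf_def by (simp add: F_c G_c)

lemma Q_mult: "k \<le> Suc m \<Longrightarrow> x \<in> carrier (G (Suc m)) \<Longrightarrow> y \<in> carrier (G (Suc m)) \<Longrightarrow>
   Qf A m k (x \<otimes>\<^bsub>G (Suc m)\<^esub> y) = Qf A m k x \<otimes>\<^bsub>G (Suc m)\<^esub> Qf A m k y"
  unfolding Qf_def by (simp add: F_mult G_mult F_c)

lemma Q_gen: "k \<le> Suc m \<Longrightarrow> j \<le> m \<Longrightarrow> a \<in> carrier (G m) \<Longrightarrow> Qf A m k (s m j a) = \<one>\<^bsub>G (Suc m)\<^esub>"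
proof -
  assume a: "k \<le> Suc m" "j \<le> m" "a \<in> carrier (G m)"
  show ?thesis
  proof (cases "j < k")
    case True
    then show ?thesis unfolding Qf_def using a by (simp add: F_kill G_one)
  next
    case False
    have "\<exists>b \<in> carrier (G m). Ff A m k (s m j a) = s m j b"
    proof (cases k)
      case 0
      then show ?thesis using a by auto
    next
      case (Suc k')
      then obtain p where p: "m = Suc p" using a False by (cases m) auto
      show ?thesis using F_comm[of k j p a] p a False F_c[of k p a] by auto
    qed
    then obtain b where b: "b \<in> carrier (G m)" "Ff A m k (s m j a) = s m j b" by blast
    show ?thesis unfolding Qf_def using b a False by (simp add: G_kill)
  qed
qed

lemma Q_ds: "x \<in> degen_sums A n \<Longrightarrow> n = Suc m \<Longrightarrow> k \<le> Suc m \<Longrightarrow> Qf A m k x = \<one>\<^bsub>G (Suc m)\<^esub>"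
proof (induction rule: degen_sums.induct)
  case (degen m' i x)
  then show ?case by (simp add: Q_gen)
next
  case (plus a b)
  then show ?case using ds_carrier by (simp add: Q_mult)
qed

lemma Q_fix: "k \<le> Suc m \<Longrightarrow> x \<in> carrier (G (Suc m)) \<Longrightarrow>
    (\<forall>i \<le> Suc m. i \<noteq> k \<longrightarrow> d m i x = \<one>\<^bsub>G m\<^esub>) \<Longrightarrow> Qf A m k x = x"
  unfolding Qf_def
  by (subst F_fix) (auto intro!: G_fix)

lemma ds_inv: "x \<in> degen_sums A n \<Longrightarrow> inv\<^bsub>G n\<^esub> x \<in> degen_sums A n"
proof (induction rule: degen_sums.induct)
  case (degen m i x)
  then show ?case using s_inv[of i m x] degen_sums.degen[of n m i "inv\<^bsub>G m\<^esub> x" A] by simp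
next
  case (plus a b)
  interpret Gn: comm_group "G n" by (rule grp)
  show ?case using plus ds_carrier degen_sums.plus[OF plus.IH]
    by (simp add: Gn.inv_mult)
qed

lemma thin_unique:
  assumes "x \<in> degen_sums A (Suc m)" "x' \<in> degen_sums A (Suc m)" "k \<le> Suc m"
    "\<forall>i \<le> Suc m. i \<noteq> k \<longrightarrow> d m i x = d m i x'"
  shows "x = x'"
proof -
  interpret GS: comm_group "G (Suc m)" by (rule grp)
  have xc: "x \<in> carrier (G (Suc m))" "x' \<in> carrier (G (Suc m))" using assms ds_carrier by auto
  define z where "z = x \<otimes>\<^bsub>G (Suc m)\<^esub> inv\<^bsub>G (Suc m)\<^esub> x'"
  have zd: "z \<in> degen_sums A (Suc m)"
    unfolding z_def by (rule degen_sums.plus[OF assms(1) ds_inv[OF assms(2)]])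
  have zc: "z \<in> carrier (G (Suc m))" using zd ds_carrier by blast
  have "\<forall>i \<le> Suc m. i \<noteq> k \<longrightarrow> d m i z = \<one>\<^bsub>G m\<^esub>"
    using assms(4) xc unfolding z_def by (auto simp: d_mult d_inv)
  hence "Qf A m k z = z" using Q_fix assms(3) zc by blast
  moreover have "Qf A m k z = \<one>\<^bsub>G (Suc m)\<^esub>" using Q_ds[OF zd refl assms(3)] .
  ultimately have "z = \<one>\<^bsub>G (Suc m)\<^esub>" by simp
  then show ?thesis unfolding z_def using xc
    by (metis GS.inv_closed GS.inv_equality GS.inv_inv)
qed

lemma U_sT_fill:
  assumes "is_horn (U_sT A) m k h"
  shows "\<exists>!x. is_filler (U_sT A) m k h x \<and> x \<in> thin (U_sT A) (Suc m)"
proof -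
  have H: "k \<le> Suc m" "\<And>i. i \<le> Suc m \<Longrightarrow> i \<noteq> k \<Longrightarrow> h i \<in> carrier (G m)"
    "\<And>p i j. m = Suc p \<Longrightarrow> i < j \<Longrightarrow> j \<le> Suc m \<Longrightarrow> i \<noteq> k \<Longrightarrow> j \<noteq> k \<Longrightarrow>
        d p i (h j) = d p (j - 1) (h i)"
    using assms unfolding is_horn_def U_sT_def by auto
  obtain x where x: "x \<in> degen_sums A (Suc m)" "\<forall>i \<le> Suc m. i \<noteq> k \<longrightarrow> d m i x = h i"
    using filler_exists[OF H] by blast
  show ?thesis
  proof (rule ex1I[of _ x])
    show "is_filler (U_sT A) m k h x \<and> x \<in> thin (U_sT A) (Suc m)"
      using x ds_carrier unfolding is_filler_def U_sT_def by auto
  next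
    fix x' assume "is_filler (U_sT A) m k h x' \<and> x' \<in> thin (U_sT A) (Suc m)"
    hence "x' \<in> degen_sums A (Suc m)" "\<forall>i \<le> Suc m. i \<noteq> k \<longrightarrow> d m i x' = h i"
      unfolding is_filler_def U_sT_def by auto
    then show "x' = x" using thin_unique[of x' m x k] x H(1) by auto
  qed
qed

lemma U_sT_fill_prop:
  assumes "is_horn (U_sT A) m k h"
  shows "is_filler (U_sT A) m k h (fill (U_sT A) m k h) \<and> fill (U_sT A) m k h \<in> thin (U_sT A) (Suc m)"
  unfolding fill_def by (rule theI'[OF U_sT_fill[OF assms]])

end

lemma hom_comp: "f \<in> hom G H \<Longrightarrow> g \<in> hom H I \<Longrightarrow> (\<lambda>x. g (f x)) \<in> hom G I"
  using hom_compose[of f G H g I] by (simp add: comp_def)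

lemma Z_carrier: "c \<in> carrier (ZX_lvl K n) \<longleftrightarrow> finite {x. c x \<noteq> 0} \<and> {x. c x \<noteq> 0} \<subseteq> simp K n"
  by (simp add: ZX_lvl_def)

lemma Z_mult[simp]: "c \<otimes>\<^bsub>ZX_lvl K n\<^esub> d = (\<lambda>x. c x + d x)"
  by (simp add: ZX_lvl_def)

lemma Z_one[simp]: "\<one>\<^bsub>ZX_lvl K n\<^esub> = (\<lambda>x. 0)"
  by (simp add: ZX_lvl_def)

lemma Z_grp: "comm_group (ZX_lvl K n)"
proof (rule comm_groupI)
  fix x y assume "x \<in> carrier (ZX_lvl K n)" "y \<in> carrier (ZX_lvl K n)"
  then show "x \<otimes>\<^bsub>ZX_lvl K n\<^esub> y \<in> carrier (ZX_lvl K n)"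
  proof -
    have "{z. x z + y z \<noteq> 0} \<subseteq> {z. x z \<noteq> 0} \<union> {z. y z \<noteq> 0}" by auto
    then show ?thesis using \<open>x \<in> carrier (ZX_lvl K n)\<close> \<open>y \<in> carrier (ZX_lvl K n)\<close>
      unfolding Z_carrier Z_mult by (auto intro: finite_subset)
  qed
next
  show "\<one>\<^bsub>ZX_lvl K n\<^esub> \<in> carrier (ZX_lvl K n)" by (simp add: Z_carrier)
next
  fix x y z show "x \<otimes>\<^bsub>ZX_lvl K n\<^esub> y \<otimes>\<^bsub>ZX_lvl K n\<^esub> z = x \<otimes>\<^bsub>ZX_lvl K n\<^esub> (y \<otimes>\<^bsub>ZX_lvl K n\<^esub> z)"
    by (simp add: add.assoc)
next
  fix x y show "x \<otimes>\<^bsub>ZX_lvl K n\<^esub> y = y \<otimes>\<^bsub>ZX_lvl K n\<^esub> x"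
    by (simp add: add.commute)
next
  fix x show "\<one>\<^bsub>ZX_lvl K n\<^esub> \<otimes>\<^bsub>ZX_lvl K n\<^esub> x = x" by simp
next
  fix x assume "x \<in> carrier (ZX_lvl K n)"
  then show "\<exists>y \<in> carrier (ZX_lvl K n). y \<otimes>\<^bsub>ZX_lvl K n\<^esub> x = \<one>\<^bsub>ZX_lvl K n\<^esub>"
    by (intro bexI[of _ "\<lambda>y. - x y"]) (auto simp: Z_carrier)
qed

lemma Z_grp': "group (ZX_lvl K n)"
  using Z_grp[of K n] by (simp add: comm_group_def)

lemma Z_inv: "c \<in> carrier (ZX_lvl K n) \<Longrightarrow> inv\<^bsub>ZX_lvl K n\<^esub> c = (\<lambda>x. - c x)"
  by (rule group.inv_equality[OF Z_grp']) (auto simp: Z_carrier)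

lemma eta_c: "x \<in> simp K n \<Longrightarrow> eta x \<in> carrier (ZX_lvl K n)"
proof -
  assume "x \<in> simp K n"
  moreover have "{y. eta x y \<noteq> 0} = {x}" by (auto simp: eta_def)
  ultimately show ?thesis by (simp add: Z_carrier)
qed

lemma lin_alt: "finite T \<Longrightarrow> {x. c x \<noteq> 0} \<subseteq> T \<Longrightarrow> lin f c y = (\<Sum>x\<in>{x\<in>T. f x = y}. c x)"
  unfolding lin_def
  by (rule sum.mono_neutral_left) auto

lemma lin_c:
  assumes f: "\<And>x. x \<in> simp K m \<Longrightarrow> f x \<in> simp K n" and c: "c \<in> carrier (ZX_lvl K m)"
  shows "lin f c \<in> carrier (ZX_lvl K n)"
proof -
  have z: "lin f c y = 0" if y: "y \<notin> f ` {x. c x \<noteq> 0}" for y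
  proof -
    have "{x. c x \<noteq> 0 \<and> f x = y} = {}" using y by auto
    then show ?thesis unfolding lin_def by (simp only: sum.empty)
  qed
  have sub: "{y. lin f c y \<noteq> 0} \<subseteq> f ` {x. c x \<noteq> 0}"
    using z by auto
  have "finite (f ` {x. c x \<noteq> 0})" using c by (simp add: Z_carrier)
  moreover have "f ` {x. c x \<noteq> 0} \<subseteq> simp K n" using c f by (auto simp: Z_carrier)
  ultimately show ?thesis using sub by (auto simp: Z_carrier intro: finite_subset)
qed

lemma lin_hom:
  assumes f: "\<And>x. x \<in> simp K m \<Longrightarrow> f x \<in> simp K n"
  shows "lin f \<in> hom (ZX_lvl K m) (ZX_lvl K n)"
proof (rule homI)
  fix c assume "c \<in> carrier (ZX_lvl K m)"
  then show "lin f c \<in> carrier (ZX_lvl K n)" using lin_c[of K m f n c] f by blast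
next
  fix c e assume c: "c \<in> carrier (ZX_lvl K m)" and e: "e \<in> carrier (ZX_lvl K m)"
  define T where "T = {x. c x \<noteq> 0} \<union> {x. e x \<noteq> 0}"
  have T: "finite T" "{x. c x \<noteq> 0} \<subseteq> T" "{x. e x \<noteq> 0} \<subseteq> T" "{x. c x + e x \<noteq> 0} \<subseteq> T"
    using c e by (auto simp: T_def Z_carrier)
  show "lin f (c \<otimes>\<^bsub>ZX_lvl K m\<^esub> e) = lin f c \<otimes>\<^bsub>ZX_lvl K n\<^esub> lin f e"
    by (rule ext) (simp add: lin_alt[OF T(1) T(4)] lin_alt[OF T(1) T(2)] lin_alt[OF T(1) T(3)] sum.distrib)
qed

lemma lin_eta: "lin f (eta x) = eta (f x)"
proof (rule ext)
  fix y
  have "{z. eta x z \<noteq> 0 \<and> f z = y} = (if f x = y then {x} else {})" by (auto simp: eta_def)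
  then show "lin f (eta x) y = eta (f x) y" by (simp add: lin_def eta_def)
qed

lemma eta_pow_nat: "x \<in> simp K n \<Longrightarrow> eta x [^]\<^bsub>ZX_lvl K n\<^esub> (k::nat) = (\<lambda>y. if y = x then int k else 0)"
  by (induction k) (auto simp: eta_def)

lemma eta_pow: "x \<in> simp K n \<Longrightarrow> eta x [^]\<^bsub>ZX_lvl K n\<^esub> (a::int) = (\<lambda>y. if y = x then a else 0)"
proof -
  assume x: "x \<in> simp K n"
  show ?thesis
  proof (cases "a < 0")
    case True
    have c: "eta x [^]\<^bsub>ZX_lvl K n\<^esub> nat (- a) \<in> carrier (ZX_lvl K n)"
      by (rule monoid.nat_pow_closed[OF group.is_monoid[OF Z_grp'] eta_c[OF x]])
    have e: "eta x [^]\<^bsub>ZX_lvl K n\<^esub> nat (- a) = (\<lambda>y. if y = x then int (nat (- a)) else 0)"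
      by (rule eta_pow_nat[OF x])
    have c2: "(\<lambda>y. if y = x then int (nat (- a)) else 0) \<in> carrier (ZX_lvl K n)" using c e by simp
    show ?thesis using True by (simp add: int_pow_def2 e Z_inv[OF c2] fun_eq_iff)
  next
    case False
    then show ?thesis by (simp add: int_pow_def2 eta_pow_nat[OF x] fun_eq_iff)
  qed
qed

lemma gen_eq:
  assumes H: "group H" and phi: "\<phi> \<in> hom (ZX_lvl K n) H" and psi: "\<psi> \<in> hom (ZX_lvl K n) H"
    and eq: "\<And>x. x \<in> simp K n \<Longrightarrow> \<phi> (eta x) = \<psi> (eta x)"
    and c: "c \<in> carrier (ZX_lvl K n)"
  shows "\<phi> c = \<psi> c"
proof -
  have gh1: "group_hom (ZX_lvl K n) H \<phi>" using H phi Z_grp' by (simp add: group_hom_def group_hom_axioms_def)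
  have gh2: "group_hom (ZX_lvl K n) H \<psi>" using H psi Z_grp' by (simp add: group_hom_def group_hom_axioms_def)
  have "\<forall>c. c \<in> carrier (ZX_lvl K n) \<longrightarrow> {x. c x \<noteq> 0} \<subseteq> S \<longrightarrow> \<phi> c = \<psi> c" if S: "finite S" for S
    using S
  proof (induction S rule: finite_induct)
    case empty
    then show ?case
      using group_hom.hom_one[OF gh1] group_hom.hom_one[OF gh2]
      by (auto simp: fun_eq_iff)
  next
    case (insert x S)
    show ?case
    proof (intro allI impI)
      fix c assume c: "c \<in> carrier (ZX_lvl K n)" and sub: "{x. c x \<noteq> 0} \<subseteq> insert x S"
      show "\<phi> c = \<psi> c"
      proof (cases "c x = 0")
        case True
        then have "{x. c x \<noteq> 0} \<subseteq> S" using sub by auto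
        then show ?thesis using insert.IH c by blast
      next
        case False
        then have xs: "x \<in> simp K n" using c by (auto simp: Z_carrier)
        define c' where "c' = c(x := 0)"
        define a where "a = c x"
        have c'c: "c' \<in> carrier (ZX_lvl K n)" using c unfolding c'_def Z_carrier
          by (auto elim: finite_subset[rotated])
        have c'S: "{y. c' y \<noteq> 0} \<subseteq> S" using sub by (auto simp: c'_def)
        have ep: "eta x [^]\<^bsub>ZX_lvl K n\<^esub> a \<in> carrier (ZX_lvl K n)"
          using group.int_pow_closed[OF Z_grp' eta_c[OF xs]] .
        have dec: "c = c' \<otimes>\<^bsub>ZX_lvl K n\<^esub> (eta x [^]\<^bsub>ZX_lvl K n\<^esub> a)"
          by (simp add: eta_pow[OF xs] c'_def a_def fun_eq_iff)
        have "\<phi> c = \<phi> c' \<otimes>\<^bsub>H\<^esub> \<phi> (eta x [^]\<^bsub>ZX_lvl K n\<^esub> a)"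
          unfolding dec by (rule hom_mult[OF phi c'c ep])
        also have "\<phi> (eta x [^]\<^bsub>ZX_lvl K n\<^esub> a) = \<phi> (eta x) [^]\<^bsub>H\<^esub> a"
          using group_hom.hom_int_pow[OF gh1 eta_c[OF xs]] .
        also have "\<phi> c' = \<psi> c'" using insert.IH c'c c'S by blast
        also have "\<phi> (eta x) = \<psi> (eta x)" using eq xs by blast
        also have "\<psi> (eta x) [^]\<^bsub>H\<^esub> a = \<psi> (eta x [^]\<^bsub>ZX_lvl K n\<^esub> a)"
          using group_hom.hom_int_pow[OF gh2 eta_c[OF xs]] by simp
        also have "\<psi> c' \<otimes>\<^bsub>H\<^esub> \<psi> (eta x [^]\<^bsub>ZX_lvl K n\<^esub> a) = \<psi> c"
          unfolding dec by (rule hom_mult[OF psi c'c ep, symmetric])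
        finally show ?thesis .
      qed
    qed
  qed
  then show ?thesis using c by (auto simp: Z_carrier)
qed

locale sT =
  fixes K :: "'a tcx"
  assumes sT: "is_sTCom K"
begin

lemma Kset: "is_sset (simp K) (face K) (degen K)"
  using sT by (simp add: is_sTCom_def)

lemma kd[intro,simp]: "i \<le> Suc n \<Longrightarrow> x \<in> simp K (Suc n) \<Longrightarrow> face K n i x \<in> simp K n"
  by (rule Kset[unfolded is_sset_def, THEN conjunct1, rule_format])

lemma ks[intro,simp]: "i \<le> n \<Longrightarrow> x \<in> simp K n \<Longrightarrow> degen K n i x \<in> simp K (Suc n)"
  by (rule Kset[unfolded is_sset_def, THEN conjunct2, THEN conjunct1, rule_format])

lemma kA: "i < j \<Longrightarrow> j \<le> Suc (Suc n) \<Longrightarrow> x \<in> simp K (Suc (Suc n)) \<Longrightarrow>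
        face K n i (face K (Suc n) j x) = face K n (j - 1) (face K (Suc n) i x)"
  by (rule Kset[unfolded is_sset_def, THEN conjunct2, THEN conjunct2, THEN conjunct1, rule_format])

lemma kB: "i < j \<Longrightarrow> j \<le> Suc n \<Longrightarrow> x \<in> simp K (Suc n) \<Longrightarrow>
        face K (Suc n) i (degen K (Suc n) j x) = degen K n (j - 1) (face K n i x)"
  by (rule Kset[unfolded is_sset_def, THEN conjunct2, THEN conjunct2, THEN conjunct2, THEN conjunct1, rule_format])

lemma kC1: "j \<le> n \<Longrightarrow> x \<in> simp K n \<Longrightarrow> face K n j (degen K n j x) = x"
  by (rule Kset[unfolded is_sset_def, THEN conjunct2, THEN conjunct2, THEN conjunct2, THEN conjunct2, THEN conjunct1, rule_format, THEN conjunct1])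

lemma kC2: "j \<le> n \<Longrightarrow> x \<in> simp K n \<Longrightarrow> face K n (Suc j) (degen K n j x) = x"
  by (rule Kset[unfolded is_sset_def, THEN conjunct2, THEN conjunct2, THEN conjunct2, THEN conjunct2, THEN conjunct1, rule_format, THEN conjunct2])

lemma kD: "j \<le> n \<Longrightarrow> Suc j < i \<Longrightarrow> i \<le> Suc (Suc n) \<Longrightarrow> x \<in> simp K (Suc n) \<Longrightarrow>
        face K (Suc n) i (degen K (Suc n) j x) = degen K n j (face K n (i - 1) x)"
  by (rule Kset[unfolded is_sset_def, THEN conjunct2, THEN conjunct2, THEN conjunct2, THEN conjunct2, THEN conjunct2, THEN conjunct1, rule_format])

lemma kE: "i \<le> j \<Longrightarrow> j \<le> n \<Longrightarrow> x \<in> simp K n \<Longrightarrow>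
        degen K (Suc n) i (degen K n j x) = degen K (Suc n) (Suc j) (degen K n i x)"
  by (rule Kset[unfolded is_sset_def, THEN conjunct2, THEN conjunct2, THEN conjunct2, THEN conjunct2, THEN conjunct2, THEN conjunct2, rule_format])

lemma lin_face_hom: "i \<le> Suc n \<Longrightarrow> lin (face K n i) \<in> hom (ZX_lvl K (Suc n)) (ZX_lvl K n)"
  by (rule lin_hom) simp

lemma lin_degen_hom: "i \<le> n \<Longrightarrow> lin (degen K n i) \<in> hom (ZX_lvl K n) (ZX_lvl K (Suc n))"
  by (rule lin_hom) simp

lemma lin2_eq:
  assumes g1: "\<And>x. x \<in> simp K a \<Longrightarrow> g1 x \<in> simp K b1" and f1: "\<And>x. x \<in> simp K b1 \<Longrightarrow> f1 x \<in> simp K e"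
    and g2: "\<And>x. x \<in> simp K a \<Longrightarrow> g2 x \<in> simp K b2" and f2: "\<And>x. x \<in> simp K b2 \<Longrightarrow> f2 x \<in> simp K e"
    and eq: "\<And>x. x \<in> simp K a \<Longrightarrow> f1 (g1 x) = f2 (g2 x)"
    and c: "c \<in> carrier (ZX_lvl K a)"
  shows "lin f1 (lin g1 c) = lin f2 (lin g2 c)"
proof (rule gen_eq[OF Z_grp' _ _ _ c])
  show "(\<lambda>c. lin f1 (lin g1 c)) \<in> hom (ZX_lvl K a) (ZX_lvl K e)"
    by (rule hom_comp[OF lin_hom lin_hom]) (use g1 f1 in auto)
  show "(\<lambda>c. lin f2 (lin g2 c)) \<in> hom (ZX_lvl K a) (ZX_lvl K e)"
    by (rule hom_comp[OF lin_hom lin_hom]) (use g2 f2 in auto)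
  fix x assume "x \<in> simp K a"
  then show "lin f1 (lin g1 (eta x)) = lin f2 (lin g2 (eta x))"
    by (simp add: lin_eta eq)
qed

lemma lin1_eq:
  assumes g1: "\<And>x. x \<in> simp K a \<Longrightarrow> g1 x \<in> simp K b1" and f1: "\<And>x. x \<in> simp K b1 \<Longrightarrow> f1 x \<in> simp K a"
    and eq: "\<And>x. x \<in> simp K a \<Longrightarrow> f1 (g1 x) = x"
    and c: "c \<in> carrier (ZX_lvl K a)"
  shows "lin f1 (lin g1 c) = c"
proof (rule gen_eq[OF Z_grp' _ _ _ c])
  show "(\<lambda>c. lin f1 (lin g1 c)) \<in> hom (ZX_lvl K a) (ZX_lvl K a)"
    by (rule hom_comp[OF lin_hom lin_hom]) (use g1 f1 in auto)
  show "(\<lambda>c. c) \<in> hom (ZX_lvl K a) (ZX_lvl K a)"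
    by (rule homI) auto
  fix x assume "x \<in> simp K a"
  then show "lin f1 (lin g1 (eta x)) = eta x"
    by (simp add: lin_eta eq)
qed

lemma ZX_sAb: "is_sAbGrp (ZX K)"
  unfolding is_sAbGrp_def is_sset_def
proof (intro conjI allI impI)
  show "comm_group (lvl (ZX K) n)" for n by (simp add: ZX_def Z_grp)
  show "sface (ZX K) n i \<in> hom (lvl (ZX K) (Suc n)) (lvl (ZX K) n)" if "i \<le> Suc n" for n i
    using that by (simp add: ZX_def lin_face_hom)
  show "sdegen (ZX K) n i \<in> hom (lvl (ZX K) n) (lvl (ZX K) (Suc n))" if "i \<le> n" for n i
    using that by (simp add: ZX_def lin_degen_hom)
  show "sface (ZX K) n i x \<in> carrier (lvl (ZX K) n)" if "i \<le> Suc n" "x \<in> carrier (lvl (ZX K) (Suc n))" for n i x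
    using that by (simp add: ZX_def) (rule lin_c, auto)
  show "sdegen (ZX K) n i x \<in> carrier (lvl (ZX K) (Suc n))" if "i \<le> n" "x \<in> carrier (lvl (ZX K) n)" for n i x
    using that by (simp add: ZX_def) (rule lin_c, auto)
  show "sface (ZX K) n i (sface (ZX K) (Suc n) j x) = sface (ZX K) n (j - 1) (sface (ZX K) (Suc n) i x)"
    if "i < j" "j \<le> Suc (Suc n)" "x \<in> carrier (lvl (ZX K) (Suc (Suc n)))" for n i j x
    using that by (simp add: ZX_def) (rule lin2_eq, auto simp: kA)
  show "sface (ZX K) (Suc n) i (sdegen (ZX K) (Suc n) j x) = sdegen (ZX K) n (j - 1) (sface (ZX K) n i x)"
    if "i < j" "j \<le> Suc n" "x \<in> carrier (lvl (ZX K) (Suc n))" for n i j x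
    using that by (simp add: ZX_def) (rule lin2_eq, auto simp: kB)
  show "sface (ZX K) n j (sdegen (ZX K) n j x) = x"
    if "j \<le> n" "x \<in> carrier (lvl (ZX K) n)" for n j x
    using that by (simp add: ZX_def) (rule lin1_eq, auto simp: kC1)
  show "sface (ZX K) n (Suc j) (sdegen (ZX K) n j x) = x"
    if "j \<le> n" "x \<in> carrier (lvl (ZX K) n)" for n j x
    using that by (simp add: ZX_def) (rule lin1_eq, auto simp: kC2)
  show "sface (ZX K) (Suc n) i (sdegen (ZX K) (Suc n) j x) = sdegen (ZX K) n j (sface (ZX K) n (i - 1) x)"
    if "j \<le> n" "Suc j < i" "i \<le> Suc (Suc n)" "x \<in> carrier (lvl (ZX K) (Suc n))" for n i j x
    using that by (simp add: ZX_def) (rule lin2_eq, auto simp: kD)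
  show "sdegen (ZX K) (Suc n) i (sdegen (ZX K) n j x) = sdegen (ZX K) (Suc n) (Suc j) (sdegen (ZX K) n i x)"
    if "i \<le> j" "j \<le> n" "x \<in> carrier (lvl (ZX K) n)" for n i j x
    using that by (simp add: ZX_def) (rule lin2_eq, auto simp: kE)
qed

end

definition fam :: "'a tcx \<Rightarrow> (nat \<Rightarrow> ('a \<Rightarrow> int) set) \<Rightarrow> bool" where
  "fam K S \<longleftrightarrow> (\<forall>p. subgroup (S p) (ZX_lvl K p)) \<and>
      (\<forall>p i c. i \<le> Suc p \<longrightarrow> c \<in> S (Suc p) \<longrightarrow> sface (ZX K) p i c \<in> S p) \<and>
      (\<forall>p i c. i \<le> p \<longrightarrow> c \<in> S p \<longrightarrow> sdegen (ZX K) p i c \<in> S (Suc p)) \<and>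
      (\<forall>p. relgen K p \<subseteq> S p)"

lemma Nsub_fam_def: "Nsub K n = \<Inter> {S n | S. fam K S}"
  unfolding Nsub_def fam_def by simp

context sT
begin

lemma ZX_sAG: "sAG (ZX K)"
  by unfold_locales (rule ZX_sAb)

lemma sface_ZX[simp]: "sface (ZX K) n i = lin (face K n i)" by (simp add: ZX_def)
lemma sdegen_ZX[simp]: "sdegen (ZX K) n i = lin (degen K n i)" by (simp add: ZX_def)
lemma lvl_ZX[simp]: "lvl (ZX K) n = ZX_lvl K n" by (simp add: ZX_def)

lemma K_fill: "is_horn K m k h \<Longrightarrow> \<exists>!x. is_filler K m k h x \<and> x \<in> thin K (Suc m)"
  by (rule sT[unfolded is_sTCom_def, THEN conjunct2, THEN conjunct2, THEN conjunct2, THEN conjunct2, THEN conjunct1, rule_format])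

lemma K_fill_prop: "is_horn K m k h \<Longrightarrow> is_filler K m k h (fill K m k h) \<and> fill K m k h \<in> thin K (Suc m)"
  unfolding fill_def by (rule theI'[OF K_fill])

lemma horn_eta: "is_horn K m k h \<Longrightarrow> is_horn (U_sT (ZX K)) m k (\<lambda>i. eta (h i))"
  unfolding is_horn_def U_sT_def by (auto simp: eta_c lin_eta)

lemma ZX_fill_prop:
  assumes "is_horn K m k h"
  shows "is_filler (U_sT (ZX K)) m k (\<lambda>i. eta (h i)) (fill (U_sT (ZX K)) m k (\<lambda>i. eta (h i)))
    \<and> fill (U_sT (ZX K)) m k (\<lambda>i. eta (h i)) \<in> degen_sums (ZX K) (Suc m)"
  using sAG.U_sT_fill_prop[OF ZX_sAG horn_eta[OF assms]] by (simp add: U_sT_def)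

lemma relgen_form:
  assumes "c \<in> relgen K n"
  obtains m k h where "n = Suc m" "is_horn K m k h"
    "c = fill (U_sT (ZX K)) m k (\<lambda>i. eta (h i)) \<otimes>\<^bsub>ZX_lvl K n\<^esub> inv\<^bsub>ZX_lvl K n\<^esub> (eta (fill K m k h))"
    "fill (U_sT (ZX K)) m k (\<lambda>i. eta (h i)) \<in> carrier (ZX_lvl K n)"
    "eta (fill K m k h) \<in> carrier (ZX_lvl K n)"
proof -
  obtain m k h where mkh: "n = Suc m" "is_horn K m k h"
    "c = (\<lambda>y. fill (U_sT (ZX K)) m k (\<lambda>i. eta (h i)) y - eta (fill K m k h) y)"
    using assms unfolding relgen_def by blast
  have F: "fill (U_sT (ZX K)) m k (\<lambda>i. eta (h i)) \<in> carrier (ZX_lvl K n)"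
    using ZX_fill_prop[OF mkh(2)] mkh(1) unfolding is_filler_def U_sT_def by simp
  have X: "eta (fill K m k h) \<in> carrier (ZX_lvl K n)"
    using K_fill_prop[OF mkh(2)] mkh(1) unfolding is_filler_def by (simp add: eta_c)
  show ?thesis
    by (rule that[OF mkh(1,2) _ F X]) (simp add: Z_inv[OF X] mkh(3))
qed

lemma relgen_c: "relgen K n \<subseteq> carrier (ZX_lvl K n)"
proof
  fix c assume "c \<in> relgen K n"
  then obtain m k h where "c = fill (U_sT (ZX K)) m k (\<lambda>i. eta (h i)) \<otimes>\<^bsub>ZX_lvl K n\<^esub> inv\<^bsub>ZX_lvl K n\<^esub> (eta (fill K m k h))"
    "fill (U_sT (ZX K)) m k (\<lambda>i. eta (h i)) \<in> carrier (ZX_lvl K n)"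
    "eta (fill K m k h) \<in> carrier (ZX_lvl K n)"
    by (rule relgen_form)
  then show "c \<in> carrier (ZX_lvl K n)"
    using group.inv_closed[OF Z_grp'] monoid.m_closed[OF group.is_monoid[OF Z_grp']] by metis
qed

lemma full_fam: "fam K (\<lambda>p. carrier (ZX_lvl K p))"
  unfolding fam_def
proof (intro conjI allI impI)
  show "subgroup (carrier (ZX_lvl K p)) (ZX_lvl K p)" for p
    by (rule group.subgroup_self[OF Z_grp'])
  show "sface (ZX K) p i c \<in> carrier (ZX_lvl K p)" if "i \<le> Suc p" "c \<in> carrier (ZX_lvl K (Suc p))" for p i c
    using that by simp (rule lin_c, auto)
  show "sdegen (ZX K) p i c \<in> carrier (ZX_lvl K (Suc p))" if "i \<le> p" "c \<in> carrier (ZX_lvl K p)" for p i c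
    using that by simp (rule lin_c, auto)
  show "relgen K p \<subseteq> carrier (ZX_lvl K p)" for p by (rule relgen_c)
qed

lemma Nsub_le: "fam K S \<Longrightarrow> Nsub K n \<subseteq> S n"
  unfolding Nsub_fam_def by blast

lemma Nsub_fam: "fam K (Nsub K)"
  unfolding fam_def
proof (intro conjI allI impI)
  show "subgroup (Nsub K p) (ZX_lvl K p)" for p
    unfolding Nsub_fam_def
    by (rule group.subgroups_Inter[OF Z_grp']) (use full_fam in \<open>auto simp: fam_def\<close>)
  show "sface (ZX K) p i c \<in> Nsub K p" if "i \<le> Suc p" "c \<in> Nsub K (Suc p)" for p i c
    using that unfolding Nsub_fam_def fam_def by blast
  show "sdegen (ZX K) p i c \<in> Nsub K (Suc p)" if "i \<le> p" "c \<in> Nsub K p" for p i c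
    using that unfolding Nsub_fam_def fam_def by blast
  show "relgen K p \<subseteq> Nsub K p" for p
    unfolding Nsub_fam_def fam_def by blast
qed

lemma N_sub: "subgroup (Nsub K n) (ZX_lvl K n)"
  using Nsub_fam unfolding fam_def by blast

lemma N_normal: "normal (Nsub K n) (ZX_lvl K n)"
  by (rule comm_group.subgroup_imp_normal[OF Z_grp N_sub])

lemma N_face: "i \<le> Suc p \<Longrightarrow> c \<in> Nsub K (Suc p) \<Longrightarrow> lin (face K p i) c \<in> Nsub K p"
  using Nsub_fam unfolding fam_def by simp

lemma N_degen: "i \<le> p \<Longrightarrow> c \<in> Nsub K p \<Longrightarrow> lin (degen K p i) c \<in> Nsub K (Suc p)"
  using Nsub_fam unfolding fam_def by simp

lemma N_relgen: "relgen K p \<subseteq> Nsub K p"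
  using Nsub_fam unfolding fam_def by simp

lemma rep_in: "c \<in> carrier (ZX_lvl K n) \<Longrightarrow> (SOME c'. c' \<in> Nsub K n #>\<^bsub>ZX_lvl K n\<^esub> c) \<in> Nsub K n #>\<^bsub>ZX_lvl K n\<^esub> c"
  by (rule someI[of _ c]) (rule group.rcos_self[OF Z_grp' _ N_sub])

lemma map_coset:
  assumes L: "L \<in> hom (ZX_lvl K a) (ZX_lvl K b)" and LN: "\<And>h. h \<in> Nsub K a \<Longrightarrow> L h \<in> Nsub K b"
    and c: "c \<in> carrier (ZX_lvl K a)" and c': "c' \<in> Nsub K a #>\<^bsub>ZX_lvl K a\<^esub> c"
  shows "Nsub K b #>\<^bsub>ZX_lvl K b\<^esub> L c' = Nsub K b #>\<^bsub>ZX_lvl K b\<^esub> L c"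
proof -
  obtain h where h: "h \<in> Nsub K a" "c' = h \<otimes>\<^bsub>ZX_lvl K a\<^esub> c"
    using c' unfolding r_coset_def by auto
  have hc: "h \<in> carrier (ZX_lvl K a)" by (rule subgroup.mem_carrier[OF N_sub h(1)])
  have "L c' = L h \<otimes>\<^bsub>ZX_lvl K b\<^esub> L c" using h hom_mult[OF L hc c] by simp
  moreover have Lhc: "L h \<in> carrier (ZX_lvl K b)" "L c \<in> carrier (ZX_lvl K b)"
    using hom_in_carrier[OF L] hc c by auto
  moreover have "Nsub K b #>\<^bsub>ZX_lvl K b\<^esub> L h = Nsub K b"
    by (rule group.coset_join2[OF Z_grp' Lhc(1) N_sub LN[OF h(1)]])
  ultimately show ?thesis
    using group.coset_mult_assoc[OF Z_grp' subgroup.subset[OF N_sub] Lhc, symmetric] by simp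
qed

lemma face_coset:
  assumes "i \<le> Suc n" "c \<in> carrier (ZX_lvl K (Suc n))"
  shows "sface (Ab_sT K) n i (Nsub K (Suc n) #>\<^bsub>ZX_lvl K (Suc n)\<^esub> c) = Nsub K n #>\<^bsub>ZX_lvl K n\<^esub> lin (face K n i) c"
  unfolding Ab_sT_def
  using map_coset[OF lin_face_hom[OF assms(1)] N_face[OF assms(1)] assms(2) rep_in[OF assms(2)]]
  by simp

lemma degen_coset:
  assumes "i \<le> n" "c \<in> carrier (ZX_lvl K n)"
  shows "sdegen (Ab_sT K) n i (Nsub K n #>\<^bsub>ZX_lvl K n\<^esub> c) = Nsub K (Suc n) #>\<^bsub>ZX_lvl K (Suc n)\<^esub> lin (degen K n i) c"
  unfolding Ab_sT_def
  using map_coset[OF lin_degen_hom[OF assms(1)] N_degen[OF assms(1)] assms(2) rep_in[OF assms(2)]]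
  by simp

lemma Ab_carrier: "carrier (lvl (Ab_sT K) n) = (\<lambda>c. Nsub K n #>\<^bsub>ZX_lvl K n\<^esub> c) ` carrier (ZX_lvl K n)"
  by (simp add: Ab_sT_def carrier_FactGroup)

lemma Ab_carrierE:
  assumes "C \<in> carrier (lvl (Ab_sT K) n)"
  obtains c where "c \<in> carrier (ZX_lvl K n)" "C = Nsub K n #>\<^bsub>ZX_lvl K n\<^esub> c"
  using assms Ab_carrier by auto

lemma Ab_carrierI: "c \<in> carrier (ZX_lvl K n) \<Longrightarrow> Nsub K n #>\<^bsub>ZX_lvl K n\<^esub> c \<in> carrier (lvl (Ab_sT K) n)"
  using Ab_carrier by auto

lemma Ab_mult: "a \<in> carrier (ZX_lvl K n) \<Longrightarrow> b \<in> carrier (ZX_lvl K n) \<Longrightarrow>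
  (Nsub K n #>\<^bsub>ZX_lvl K n\<^esub> a) \<otimes>\<^bsub>lvl (Ab_sT K) n\<^esub> (Nsub K n #>\<^bsub>ZX_lvl K n\<^esub> b) = Nsub K n #>\<^bsub>ZX_lvl K n\<^esub> (a \<otimes>\<^bsub>ZX_lvl K n\<^esub> b)"
  by (simp add: Ab_sT_def normal.rcos_sum[OF N_normal] del: Z_mult)

lemma Ab_grp: "comm_group (lvl (Ab_sT K) n)"
  unfolding Ab_sT_def using comm_group.abelian_FactGroup[OF Z_grp N_sub] by simp

end

context sT
begin

lemma lin_face_c: "i \<le> Suc n \<Longrightarrow> c \<in> carrier (ZX_lvl K (Suc n)) \<Longrightarrow> lin (face K n i) c \<in> carrier (ZX_lvl K n)"
  by (rule lin_c) auto

lemma lin_degen_c: "i \<le> n \<Longrightarrow> c \<in> carrier (ZX_lvl K n) \<Longrightarrow> lin (degen K n i) c \<in> carrier (ZX_lvl K (Suc n))"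
  by (rule lin_c) auto

lemma ZidA: "i < j \<Longrightarrow> j \<le> Suc (Suc n) \<Longrightarrow> x \<in> carrier (ZX_lvl K (Suc (Suc n))) \<Longrightarrow>
   lin (face K n i) (lin (face K (Suc n) j) x) = lin (face K n (j - 1)) (lin (face K (Suc n) i) x)"
  using sAG.idA[OF ZX_sAG] by simp

lemma ZidB: "i < j \<Longrightarrow> j \<le> Suc n \<Longrightarrow> x \<in> carrier (ZX_lvl K (Suc n)) \<Longrightarrow>
   lin (face K (Suc n) i) (lin (degen K (Suc n) j) x) = lin (degen K n (j - 1)) (lin (face K n i) x)"
  using sAG.idB[OF ZX_sAG] by simp

lemma ZidC1: "j \<le> n \<Longrightarrow> x \<in> carrier (ZX_lvl K n) \<Longrightarrow> lin (face K n j) (lin (degen K n j) x) = x"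
  using sAG.idC1[OF ZX_sAG] by simp

lemma ZidC2: "j \<le> n \<Longrightarrow> x \<in> carrier (ZX_lvl K n) \<Longrightarrow> lin (face K n (Suc j)) (lin (degen K n j) x) = x"
  using sAG.idC2[OF ZX_sAG] by simp

lemma ZidD: "j \<le> n \<Longrightarrow> Suc j < i \<Longrightarrow> i \<le> Suc (Suc n) \<Longrightarrow> x \<in> carrier (ZX_lvl K (Suc n)) \<Longrightarrow>
   lin (face K (Suc n) i) (lin (degen K (Suc n) j) x) = lin (degen K n j) (lin (face K n (i - 1)) x)"
  using sAG.idD[OF ZX_sAG] by simp

lemma ZidE: "i \<le> j \<Longrightarrow> j \<le> n \<Longrightarrow> x \<in> carrier (ZX_lvl K n) \<Longrightarrow>
   lin (degen K (Suc n) i) (lin (degen K n j) x) = lin (degen K (Suc n) (Suc j)) (lin (degen K n i) x)"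
  using sAG.idE[OF ZX_sAG] by simp

lemma Ab_sAb: "is_sAbGrp (Ab_sT K)"
  unfolding is_sAbGrp_def is_sset_def
proof (intro conjI allI impI)
  show "comm_group (lvl (Ab_sT K) n)" for n by (rule Ab_grp)
next
  fix n i x assume i: "i \<le> Suc n" and x: "x \<in> carrier (lvl (Ab_sT K) (Suc n))"
  obtain c where c: "c \<in> carrier (ZX_lvl K (Suc n))" "x = Nsub K (Suc n) #>\<^bsub>ZX_lvl K (Suc n)\<^esub> c"
    using x by (rule Ab_carrierE)
  show "sface (Ab_sT K) n i x \<in> carrier (lvl (Ab_sT K) n)"
    using c i by (simp add: face_coset Ab_carrierI lin_face_c)
next
  fix n i x assume i: "i \<le> n" and x: "x \<in> carrier (lvl (Ab_sT K) n)"
  obtain c where c: "c \<in> carrier (ZX_lvl K n)" "x = Nsub K n #>\<^bsub>ZX_lvl K n\<^esub> c"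
    using x by (rule Ab_carrierE)
  show "sdegen (Ab_sT K) n i x \<in> carrier (lvl (Ab_sT K) (Suc n))"
    using c i by (simp add: degen_coset Ab_carrierI lin_degen_c)
next
  fix n i j x assume ij: "i < j" "j \<le> Suc (Suc n)" and x: "x \<in> carrier (lvl (Ab_sT K) (Suc (Suc n)))"
  obtain c where c: "c \<in> carrier (ZX_lvl K (Suc (Suc n)))" "x = Nsub K (Suc (Suc n)) #>\<^bsub>ZX_lvl K (Suc (Suc n))\<^esub> c"
    using x by (rule Ab_carrierE)
  show "sface (Ab_sT K) n i (sface (Ab_sT K) (Suc n) j x) = sface (Ab_sT K) n (j - 1) (sface (Ab_sT K) (Suc n) i x)"
    using c ij by (simp add: face_coset lin_face_c ZidA)
next
  fix n i j x assume ij: "i < j" "j \<le> Suc n" and x: "x \<in> carrier (lvl (Ab_sT K) (Suc n))"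
  obtain c where c: "c \<in> carrier (ZX_lvl K (Suc n))" "x = Nsub K (Suc n) #>\<^bsub>ZX_lvl K (Suc n)\<^esub> c"
    using x by (rule Ab_carrierE)
  show "sface (Ab_sT K) (Suc n) i (sdegen (Ab_sT K) (Suc n) j x) = sdegen (Ab_sT K) n (j - 1) (sface (Ab_sT K) n i x)"
    using c ij by (simp add: face_coset degen_coset lin_face_c lin_degen_c ZidB)
next
  fix n j x assume j: "j \<le> n" and x: "x \<in> carrier (lvl (Ab_sT K) n)"
  obtain c where c: "c \<in> carrier (ZX_lvl K n)" "x = Nsub K n #>\<^bsub>ZX_lvl K n\<^esub> c"
    using x by (rule Ab_carrierE)
  show "sface (Ab_sT K) n j (sdegen (Ab_sT K) n j x) = x"
    using c j by (simp add: face_coset degen_coset lin_face_c lin_degen_c ZidC1 ZidC2)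
next
  fix n j x assume j: "j \<le> n" and x: "x \<in> carrier (lvl (Ab_sT K) n)"
  obtain c where c: "c \<in> carrier (ZX_lvl K n)" "x = Nsub K n #>\<^bsub>ZX_lvl K n\<^esub> c"
    using x by (rule Ab_carrierE)
  show "sface (Ab_sT K) n (Suc j) (sdegen (Ab_sT K) n j x) = x"
    using c j by (simp add: face_coset degen_coset lin_face_c lin_degen_c ZidC1 ZidC2)
next
  fix n i j x assume ij: "j \<le> n" "Suc j < i" "i \<le> Suc (Suc n)" and x: "x \<in> carrier (lvl (Ab_sT K) (Suc n))"
  obtain c where c: "c \<in> carrier (ZX_lvl K (Suc n))" "x = Nsub K (Suc n) #>\<^bsub>ZX_lvl K (Suc n)\<^esub> c"
    using x by (rule Ab_carrierE)
  show "sface (Ab_sT K) (Suc n) i (sdegen (Ab_sT K) (Suc n) j x) = sdegen (Ab_sT K) n j (sface (Ab_sT K) n (i - 1) x)"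
    using c ij by (simp add: face_coset degen_coset lin_face_c lin_degen_c ZidD)
next
  fix n i j x assume ij: "i \<le> j" "j \<le> n" and x: "x \<in> carrier (lvl (Ab_sT K) n)"
  obtain c where c: "c \<in> carrier (ZX_lvl K n)" "x = Nsub K n #>\<^bsub>ZX_lvl K n\<^esub> c"
    using x by (rule Ab_carrierE)
  show "sdegen (Ab_sT K) (Suc n) i (sdegen (Ab_sT K) n j x) = sdegen (Ab_sT K) (Suc n) (Suc j) (sdegen (Ab_sT K) n i x)"
    using c ij by (simp add: degen_coset lin_degen_c ZidE)
next
  fix n i assume i: "i \<le> Suc n"
  show "sface (Ab_sT K) n i \<in> hom (lvl (Ab_sT K) (Suc n)) (lvl (Ab_sT K) n)"
  proof (rule homI)
    fix x assume x: "x \<in> carrier (lvl (Ab_sT K) (Suc n))"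
    obtain c where c: "c \<in> carrier (ZX_lvl K (Suc n))" "x = Nsub K (Suc n) #>\<^bsub>ZX_lvl K (Suc n)\<^esub> c"
      using x by (rule Ab_carrierE)
    show "sface (Ab_sT K) n i x \<in> carrier (lvl (Ab_sT K) n)"
      using c i by (simp add: face_coset Ab_carrierI lin_face_c)
  next
    fix x y assume "x \<in> carrier (lvl (Ab_sT K) (Suc n))" "y \<in> carrier (lvl (Ab_sT K) (Suc n))"
    then obtain a b where a: "a \<in> carrier (ZX_lvl K (Suc n))" "x = Nsub K (Suc n) #>\<^bsub>ZX_lvl K (Suc n)\<^esub> a"
      and b: "b \<in> carrier (ZX_lvl K (Suc n))" "y = Nsub K (Suc n) #>\<^bsub>ZX_lvl K (Suc n)\<^esub> b"
      by (metis Ab_carrierE)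
    have ab: "a \<otimes>\<^bsub>ZX_lvl K (Suc n)\<^esub> b \<in> carrier (ZX_lvl K (Suc n))"
      using a b monoid.m_closed[OF group.is_monoid[OF Z_grp']] by blast
    show "sface (Ab_sT K) n i (x \<otimes>\<^bsub>lvl (Ab_sT K) (Suc n)\<^esub> y) =
      sface (Ab_sT K) n i x \<otimes>\<^bsub>lvl (Ab_sT K) n\<^esub> sface (Ab_sT K) n i y"
      unfolding a(2) b(2) Ab_mult[OF a(1) b(1)] face_coset[OF i a(1)] face_coset[OF i b(1)] face_coset[OF i ab]
        Ab_mult[OF lin_face_c[OF i a(1)] lin_face_c[OF i b(1)]]
      using hom_mult[OF lin_face_hom[OF i] a(1) b(1)] by simp
  qed
next
  fix n i :: nat assume i: "i \<le> n"
  show "sdegen (Ab_sT K) n i \<in> hom (lvl (Ab_sT K) n) (lvl (Ab_sT K) (Suc n))"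
  proof (rule homI)
    fix x assume x: "x \<in> carrier (lvl (Ab_sT K) n)"
    obtain c where c: "c \<in> carrier (ZX_lvl K n)" "x = Nsub K n #>\<^bsub>ZX_lvl K n\<^esub> c"
      using x by (rule Ab_carrierE)
    show "sdegen (Ab_sT K) n i x \<in> carrier (lvl (Ab_sT K) (Suc n))"
      using c i by (simp add: degen_coset Ab_carrierI lin_degen_c)
  next
    fix x y assume "x \<in> carrier (lvl (Ab_sT K) n)" "y \<in> carrier (lvl (Ab_sT K) n)"
    then obtain a b where a: "a \<in> carrier (ZX_lvl K n)" "x = Nsub K n #>\<^bsub>ZX_lvl K n\<^esub> a"
      and b: "b \<in> carrier (ZX_lvl K n)" "y = Nsub K n #>\<^bsub>ZX_lvl K n\<^esub> b"
      by (metis Ab_carrierE)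
    have ab: "a \<otimes>\<^bsub>ZX_lvl K n\<^esub> b \<in> carrier (ZX_lvl K n)"
      using a b monoid.m_closed[OF group.is_monoid[OF Z_grp']] by blast
    show "sdegen (Ab_sT K) n i (x \<otimes>\<^bsub>lvl (Ab_sT K) n\<^esub> y) =
      sdegen (Ab_sT K) n i x \<otimes>\<^bsub>lvl (Ab_sT K) (Suc n)\<^esub> sdegen (Ab_sT K) n i y"
      unfolding a(2) b(2) Ab_mult[OF a(1) b(1)] degen_coset[OF i a(1)] degen_coset[OF i b(1)] degen_coset[OF i ab]
        Ab_mult[OF lin_degen_c[OF i a(1)] lin_degen_c[OF i b(1)]]
      using hom_mult[OF lin_degen_hom[OF i] a(1) b(1)] by simp
  qed
qed

end

context sT
begin

lemma coset_ds: "c \<in> degen_sums (ZX K) n \<Longrightarrow> Nsub K n #>\<^bsub>ZX_lvl K n\<^esub> c \<in> degen_sums (Ab_sT K) n"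
proof (induction rule: degen_sums.induct)
  case (degen m i x)
  have xc: "x \<in> carrier (ZX_lvl K m)" using degen by simp
  have "Nsub K n #>\<^bsub>ZX_lvl K n\<^esub> sdegen (ZX K) m i x = sdegen (Ab_sT K) m i (Nsub K m #>\<^bsub>ZX_lvl K m\<^esub> x)"
    using degen_coset[OF degen(2) xc] degen(1) by simp
  moreover have "sdegen (Ab_sT K) m i (Nsub K m #>\<^bsub>ZX_lvl K m\<^esub> x) \<in> degen_sums (Ab_sT K) n"
    by (rule degen_sums.degen[OF degen(1) degen(2) Ab_carrierI[OF xc]])
  ultimately show ?case by simp
next
  case (plus a b)
  have ac: "a \<in> carrier (ZX_lvl K n)" "b \<in> carrier (ZX_lvl K n)"
    using sAG.ds_carrier[OF ZX_sAG plus(1)] sAG.ds_carrier[OF ZX_sAG plus(2)] by simp_all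
  have "Nsub K n #>\<^bsub>ZX_lvl K n\<^esub> (a \<otimes>\<^bsub>lvl (ZX K) n\<^esub> b) =
     (Nsub K n #>\<^bsub>ZX_lvl K n\<^esub> a) \<otimes>\<^bsub>lvl (Ab_sT K) n\<^esub> (Nsub K n #>\<^bsub>ZX_lvl K n\<^esub> b)"
    unfolding lvl_ZX by (rule Ab_mult[OF ac, symmetric])
  then show ?case using degen_sums.plus[OF plus.IH] by simp
qed

lemma thin_simp: "thin K n \<subseteq> simp K n"
  using sT[unfolded is_sTCom_def, THEN conjunct2, THEN conjunct1] by (rule spec)

lemma thin0: "thin K 0 = {}"
  by (rule sT[unfolded is_sTCom_def, THEN conjunct2, THEN conjunct2, THEN conjunct1])

lemma unit_thin:
  assumes x: "x \<in> thin K n"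
  shows "ab_unit K n x \<in> degen_sums (Ab_sT K) n"
proof -
  obtain m where m: "n = Suc m" using x thin0 by (cases n) auto
  have xs: "x \<in> simp K (Suc m)" using x thin_simp m by auto
  define h where "h = (\<lambda>i. face K m i x)"
  have horn: "is_horn K m 0 h"
    unfolding is_horn_def h_def using xs by (auto simp: kA)
  have "is_filler K m 0 h x \<and> x \<in> thin K (Suc m)"
    unfolding is_filler_def h_def using xs x m by auto
  hence fx: "fill K m 0 h = x"
    unfolding fill_def by (rule the1_equality[OF K_fill[OF horn]])
  define F where "F = fill (U_sT (ZX K)) m 0 (\<lambda>i. eta (h i))"
  have Fd: "F \<in> degen_sums (ZX K) (Suc m)" using ZX_fill_prop[OF horn] F_def by simp
  have Fc: "F \<in> carrier (ZX_lvl K (Suc m))" using sAG.ds_carrier[OF ZX_sAG Fd] by simp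
  have ec: "eta x \<in> carrier (ZX_lvl K (Suc m))" by (rule eta_c[OF xs])
  have "(\<lambda>y. F y - eta (fill K m 0 h) y) \<in> relgen K (Suc m)"
    unfolding relgen_def
    by (rule CollectI, rule exI[of _ m], rule exI[of _ 0], rule exI[of _ h]) (simp add: horn F_def)
  hence "(\<lambda>y. F y - eta x y) \<in> Nsub K (Suc m)" using N_relgen fx by auto
  moreover have "(\<lambda>y. F y - eta x y) = F \<otimes>\<^bsub>ZX_lvl K (Suc m)\<^esub> inv\<^bsub>ZX_lvl K (Suc m)\<^esub> eta x"
    by (simp add: Z_inv[OF ec])
  ultimately have "F \<in> Nsub K (Suc m) #>\<^bsub>ZX_lvl K (Suc m)\<^esub> eta x"
    using subgroup.rcos_module_rev[OF N_sub Z_grp' ec Fc] by simp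
  hence "Nsub K (Suc m) #>\<^bsub>ZX_lvl K (Suc m)\<^esub> eta x = Nsub K (Suc m) #>\<^bsub>ZX_lvl K (Suc m)\<^esub> F"
    by (rule group.repr_independence[OF Z_grp' _ ec N_sub])
  then show ?thesis using coset_ds[OF Fd] m by (simp add: ab_unit_def)
qed

lemma unit_hom: "sTCom_hom K (U_sT (Ab_sT K)) (ab_unit K)"
  unfolding sTCom_hom_def is_smap_def
proof (intro conjI allI impI ballI)
  fix n x assume "x \<in> simp K n"
  then show "ab_unit K n x \<in> simp (U_sT (Ab_sT K)) n"
    by (simp add: U_sT_def ab_unit_def Ab_carrierI eta_c)
next
  fix n i x assume i: "i \<le> Suc n" and x: "x \<in> simp K (Suc n)"
  show "ab_unit K n (face K n i x) = face (U_sT (Ab_sT K)) n i (ab_unit K (Suc n) x)"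
    using face_coset[OF i eta_c[OF x]] by (simp add: U_sT_def ab_unit_def lin_eta)
next
  fix n i x assume i: "i \<le> n" and x: "x \<in> simp K n"
  show "ab_unit K (Suc n) (degen K n i x) = degen (U_sT (Ab_sT K)) n i (ab_unit K n x)"
    using degen_coset[OF i eta_c[OF x]] by (simp add: U_sT_def ab_unit_def lin_eta)
next
  fix n x assume "x \<in> thin K n"
  then show "ab_unit K n x \<in> thin (U_sT (Ab_sT K)) n"
    using unit_thin by (simp add: U_sT_def)
qed

end

definition fbar :: "'c sab \<Rightarrow> (nat \<Rightarrow> 'a \<Rightarrow> 'c) \<Rightarrow> nat \<Rightarrow> ('a \<Rightarrow> int) \<Rightarrow> 'c" where
  "fbar A f n c = finprod (lvl A n) (\<lambda>x. f n x [^]\<^bsub>lvl A n\<^esub> c x) {x. c x \<noteq> 0}"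

locale univ = sT K + A: sAG A for K :: "'a tcx" and A :: "'c sab" +
  fixes f :: "nat \<Rightarrow> 'a \<Rightarrow> 'c"
  assumes fh: "sTCom_hom K (U_sT A) f"
begin

lemma f_c: "x \<in> simp K n \<Longrightarrow> f n x \<in> carrier (lvl A n)"
  using fh unfolding sTCom_hom_def is_smap_def U_sT_def by simp

lemma f_face: "i \<le> Suc n \<Longrightarrow> x \<in> simp K (Suc n) \<Longrightarrow> f n (face K n i x) = sface A n i (f (Suc n) x)"
  using fh unfolding sTCom_hom_def is_smap_def U_sT_def by simp

lemma f_degen: "i \<le> n \<Longrightarrow> x \<in> simp K n \<Longrightarrow> f (Suc n) (degen K n i x) = sdegen A n i (f n x)"
  using fh unfolding sTCom_hom_def is_smap_def U_sT_def by simp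

lemma f_thin: "x \<in> thin K n \<Longrightarrow> f n x \<in> degen_sums A n"
  using fh unfolding sTCom_hom_def is_smap_def U_sT_def by simp

lemma fb_alt:
  assumes T: "finite T" "{x. c x \<noteq> 0} \<subseteq> T" "T \<subseteq> simp K n"
  shows "fbar A f n c = finprod (lvl A n) (\<lambda>x. f n x [^]\<^bsub>lvl A n\<^esub> c x) T"
proof -
  interpret An: comm_group "lvl A n" by (rule A.grp)
  show ?thesis unfolding fbar_def
    by (rule An.finprod_mono_neutral_cong_left) (use T f_c in auto)
qed

lemma fb_hom: "fbar A f n \<in> hom (ZX_lvl K n) (lvl A n)"
proof (rule homI)
  interpret An: comm_group "lvl A n" by (rule A.grp)
  fix c assume c: "c \<in> carrier (ZX_lvl K n)"
  show "fbar A f n c \<in> carrier (lvl A n)"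
    unfolding fbar_def using c f_c by (auto simp: Z_carrier intro!: An.finprod_closed)
next
  interpret An: comm_group "lvl A n" by (rule A.grp)
  fix c e assume c: "c \<in> carrier (ZX_lvl K n)" and e: "e \<in> carrier (ZX_lvl K n)"
  define T where "T = {x. c x \<noteq> 0} \<union> {x. e x \<noteq> 0}"
  have T: "finite T" "{x. c x \<noteq> 0} \<subseteq> T" "{x. e x \<noteq> 0} \<subseteq> T" "{x. c x + e x \<noteq> 0} \<subseteq> T" "T \<subseteq> simp K n"
    using c e by (auto simp: T_def Z_carrier)
  have "fbar A f n (c \<otimes>\<^bsub>ZX_lvl K n\<^esub> e) = finprod (lvl A n) (\<lambda>x. f n x [^]\<^bsub>lvl A n\<^esub> (c x + e x)) T"
    using fb_alt[OF T(1) T(4) T(5)] by simp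
  also have "\<dots> = finprod (lvl A n) (\<lambda>x. f n x [^]\<^bsub>lvl A n\<^esub> c x \<otimes>\<^bsub>lvl A n\<^esub> f n x [^]\<^bsub>lvl A n\<^esub> e x) T"
    by (rule An.finprod_cong') (use T f_c in \<open>auto simp: An.int_pow_mult\<close>)
  also have "\<dots> = finprod (lvl A n) (\<lambda>x. f n x [^]\<^bsub>lvl A n\<^esub> c x) T \<otimes>\<^bsub>lvl A n\<^esub> finprod (lvl A n) (\<lambda>x. f n x [^]\<^bsub>lvl A n\<^esub> e x) T"
    by (rule An.finprod_multf) (use T f_c in auto)
  also have "\<dots> = fbar A f n c \<otimes>\<^bsub>lvl A n\<^esub> fbar A f n e"
    using fb_alt[OF T(1) T(2) T(5)] fb_alt[OF T(1) T(3) T(5)] by simp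
  finally show "fbar A f n (c \<otimes>\<^bsub>ZX_lvl K n\<^esub> e) = fbar A f n c \<otimes>\<^bsub>lvl A n\<^esub> fbar A f n e" .
qed

lemma fb_eta: "x \<in> simp K n \<Longrightarrow> fbar A f n (eta x) = f n x"
proof -
  assume x: "x \<in> simp K n"
  interpret An: comm_group "lvl A n" by (rule A.grp)
  have "{y. eta x y \<noteq> 0} = {x}" by (auto simp: eta_def)
  then show ?thesis unfolding fbar_def using f_c[OF x] by (simp add: eta_def)
qed

lemma fb_face: "i \<le> Suc n \<Longrightarrow> c \<in> carrier (ZX_lvl K (Suc n)) \<Longrightarrow>
   fbar A f n (lin (face K n i) c) = sface A n i (fbar A f (Suc n) c)"
proof -
  assume i: "i \<le> Suc n" and c: "c \<in> carrier (ZX_lvl K (Suc n))"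
  show ?thesis
  proof (rule gen_eq[OF A.grp' _ _ _ c])
    show "(\<lambda>c. fbar A f n (lin (face K n i) c)) \<in> hom (ZX_lvl K (Suc n)) (lvl A n)"
      by (rule hom_comp[OF lin_face_hom[OF i] fb_hom])
    show "(\<lambda>c. sface A n i (fbar A f (Suc n) c)) \<in> hom (ZX_lvl K (Suc n)) (lvl A n)"
      by (rule hom_comp[OF fb_hom A.d_hom[OF i]])
    fix x assume x: "x \<in> simp K (Suc n)"
    show "fbar A f n (lin (face K n i) (eta x)) = sface A n i (fbar A f (Suc n) (eta x))"
      using x i by (simp add: lin_eta fb_eta f_face)
  qed
qed

lemma fb_degen: "i \<le> n \<Longrightarrow> c \<in> carrier (ZX_lvl K n) \<Longrightarrow>
   fbar A f (Suc n) (lin (degen K n i) c) = sdegen A n i (fbar A f n c)"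
proof -
  assume i: "i \<le> n" and c: "c \<in> carrier (ZX_lvl K n)"
  show ?thesis
  proof (rule gen_eq[OF A.grp' _ _ _ c])
    show "(\<lambda>c. fbar A f (Suc n) (lin (degen K n i) c)) \<in> hom (ZX_lvl K n) (lvl A (Suc n))"
      by (rule hom_comp[OF lin_degen_hom[OF i] fb_hom])
    show "(\<lambda>c. sdegen A n i (fbar A f n c)) \<in> hom (ZX_lvl K n) (lvl A (Suc n))"
      by (rule hom_comp[OF fb_hom A.s_hom[OF i]])
    fix x assume x: "x \<in> simp K n"
    show "fbar A f (Suc n) (lin (degen K n i) (eta x)) = sdegen A n i (fbar A f n (eta x))"
      using x i by (simp add: lin_eta fb_eta f_degen)
  qed
qed

lemma fb_c: "c \<in> carrier (ZX_lvl K n) \<Longrightarrow> fbar A f n c \<in> carrier (lvl A n)"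
  by (rule hom_in_carrier[OF fb_hom])

lemma fb_mult: "a \<in> carrier (ZX_lvl K n) \<Longrightarrow> b \<in> carrier (ZX_lvl K n) \<Longrightarrow>
   fbar A f n (a \<otimes>\<^bsub>ZX_lvl K n\<^esub> b) = fbar A f n a \<otimes>\<^bsub>lvl A n\<^esub> fbar A f n b"
  by (rule hom_mult[OF fb_hom])

lemma fb_ds: "c \<in> degen_sums (ZX K) n \<Longrightarrow> fbar A f n c \<in> degen_sums A n"
proof (induction rule: degen_sums.induct)
  case (degen m i x)
  then show ?case using fb_degen[of i m x] fb_c[of x m] degen_sums.degen[of n m i "fbar A f m x" A] by simp
next
  case (plus a b)
  have ac: "a \<in> carrier (ZX_lvl K n)" "b \<in> carrier (ZX_lvl K n)"
    using sAG.ds_carrier[OF ZX_sAG plus(1)] sAG.ds_carrier[OF ZX_sAG plus(2)] by simp_all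
  show ?case using fb_mult[OF ac, symmetric] degen_sums.plus[OF plus.IH] by (simp del: Z_mult)
qed


lemma fb_relgen: "c \<in> relgen K n \<Longrightarrow> fbar A f n c = \<one>\<^bsub>lvl A n\<^esub>"
proof -
  assume "c \<in> relgen K n"
  then obtain m k h where mkh: "n = Suc m" "is_horn K m k h"
    "c = fill (U_sT (ZX K)) m k (\<lambda>i. eta (h i)) \<otimes>\<^bsub>ZX_lvl K n\<^esub> inv\<^bsub>ZX_lvl K n\<^esub> (eta (fill K m k h))"
    "fill (U_sT (ZX K)) m k (\<lambda>i. eta (h i)) \<in> carrier (ZX_lvl K n)"
    "eta (fill K m k h) \<in> carrier (ZX_lvl K n)"
    by (rule relgen_form)
  define Fz where "Fz = fill (U_sT (ZX K)) m k (\<lambda>i. eta (h i))"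
  define Xz where "Xz = fill K m k h"
  have Fp: "is_filler (U_sT (ZX K)) m k (\<lambda>i. eta (h i)) Fz" "Fz \<in> degen_sums (ZX K) (Suc m)"
    using ZX_fill_prop[OF mkh(2)] Fz_def by auto
  have Xp: "is_filler K m k h Xz" "Xz \<in> thin K (Suc m)"
    using K_fill_prop[OF mkh(2)] Xz_def by auto
  have Xs: "Xz \<in> simp K (Suc m)" using Xp unfolding is_filler_def by simp
  have Fc: "Fz \<in> carrier (ZX_lvl K (Suc m))" using Fp unfolding is_filler_def U_sT_def by simp
  have k: "k \<le> Suc m" using mkh(2) unfolding is_horn_def by simp
  have "fbar A f (Suc m) Fz = f (Suc m) Xz"
  proof (rule A.thin_unique[OF fb_ds[OF Fp(2)] f_thin[OF Xp(2)] k], intro allI impI)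
    fix i assume i: "i \<le> Suc m" "i \<noteq> k"
    have "sface A m i (fbar A f (Suc m) Fz) = fbar A f m (lin (face K m i) Fz)"
      using fb_face[OF i(1) Fc] by simp
    also have "lin (face K m i) Fz = eta (h i)"
      using Fp(1) i unfolding is_filler_def U_sT_def by simp
    also have "fbar A f m (eta (h i)) = f m (h i)"
      using mkh(2) i fb_eta unfolding is_horn_def by simp
    also have "h i = face K m i Xz" using Xp(1) i unfolding is_filler_def by simp
    also have "f m (face K m i Xz) = sface A m i (f (Suc m) Xz)" by (rule f_face[OF i(1) Xs])
    finally show "sface A m i (fbar A f (Suc m) Fz) = sface A m i (f (Suc m) Xz)" .
  qed
  moreover have "fbar A f n c = fbar A f n Fz \<otimes>\<^bsub>lvl A n\<^esub> inv\<^bsub>lvl A n\<^esub> fbar A f n (eta Xz)"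
  proof -
    have gh: "group_hom (ZX_lvl K n) (lvl A n) (fbar A f n)"
      using Z_grp' A.grp' fb_hom by (simp add: group_hom_def group_hom_axioms_def)
    have ic: "inv\<^bsub>ZX_lvl K n\<^esub> (eta Xz) \<in> carrier (ZX_lvl K n)"
      using mkh(5) group.inv_closed[OF Z_grp'] Xz_def by simp
    show ?thesis unfolding mkh(3) Fz_def[symmetric] Xz_def[symmetric]
      using fb_mult[OF mkh(4)[folded Fz_def] ic] group_hom.hom_inv[OF gh mkh(5)[folded Xz_def]] by simp
  qed
  moreover have "fbar A f n (eta Xz) = f n Xz" using fb_eta Xs mkh(1) by simp
  ultimately show ?thesis using mkh(1) f_c Xs by simp
qed

lemma ker_fam: "fam K (\<lambda>p. kernel (ZX_lvl K p) (lvl A p) (fbar A f p))"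
  unfolding fam_def
proof (intro conjI allI impI)
  show "subgroup (kernel (ZX_lvl K p) (lvl A p) (fbar A f p)) (ZX_lvl K p)" for p
  proof -
    have "group_hom (ZX_lvl K p) (lvl A p) (fbar A f p)"
      using Z_grp' A.grp' fb_hom by (simp add: group_hom_def group_hom_axioms_def)
    then show ?thesis by (rule group_hom.subgroup_kernel)
  qed
  show "sface (ZX K) p i c \<in> kernel (ZX_lvl K p) (lvl A p) (fbar A f p)"
    if "i \<le> Suc p" "c \<in> kernel (ZX_lvl K (Suc p)) (lvl A (Suc p)) (fbar A f (Suc p))" for p i c
    using that fb_face[OF that(1)] A.d_one[OF that(1)] by (auto simp: kernel_def lin_face_c)
  show "sdegen (ZX K) p i c \<in> kernel (ZX_lvl K (Suc p)) (lvl A (Suc p)) (fbar A f (Suc p))"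
    if "i \<le> p" "c \<in> kernel (ZX_lvl K p) (lvl A p) (fbar A f p)" for p i c
    using that fb_degen[OF that(1)] A.s_one[OF that(1)] by (auto simp: kernel_def lin_degen_c)
  show "relgen K p \<subseteq> kernel (ZX_lvl K p) (lvl A p) (fbar A f p)" for p
    using relgen_c fb_relgen by (auto simp: kernel_def)
qed

lemma N_ker: "h \<in> Nsub K n \<Longrightarrow> fbar A f n h = \<one>\<^bsub>lvl A n\<^esub>"
  using Nsub_le[OF ker_fam] by (auto simp: kernel_def)

definition gmap :: "nat \<Rightarrow> ('a \<Rightarrow> int) set \<Rightarrow> 'c" where
  "gmap n C = fbar A f n (SOME c. c \<in> C)"

lemma g_coset: "c \<in> carrier (ZX_lvl K n) \<Longrightarrow> gmap n (Nsub K n #>\<^bsub>ZX_lvl K n\<^esub> c) = fbar A f n c"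
proof -
  assume c: "c \<in> carrier (ZX_lvl K n)"
  define c' where "c' = (SOME c'. c' \<in> Nsub K n #>\<^bsub>ZX_lvl K n\<^esub> c)"
  have "c' \<in> Nsub K n #>\<^bsub>ZX_lvl K n\<^esub> c" using rep_in[OF c] c'_def by simp
  then obtain h where h: "h \<in> Nsub K n" "c' = h \<otimes>\<^bsub>ZX_lvl K n\<^esub> c"
    unfolding r_coset_def by auto
  have hc: "h \<in> carrier (ZX_lvl K n)" by (rule subgroup.mem_carrier[OF N_sub h(1)])
  have "gmap n (Nsub K n #>\<^bsub>ZX_lvl K n\<^esub> c) = fbar A f n c'" unfolding gmap_def c'_def by simp
  also have "\<dots> = fbar A f n h \<otimes>\<^bsub>lvl A n\<^esub> fbar A f n c"
    unfolding h(2) by (rule fb_mult[OF hc c])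
  also have "\<dots> = fbar A f n c" using N_ker[OF h(1)] fb_c[OF c] by simp
  finally show ?thesis .
qed

lemma g_hom: "sAb_hom (Ab_sT K) A gmap"
  unfolding sAb_hom_def is_smap_def
proof (intro conjI allI impI ballI)
  fix n x assume x: "x \<in> carrier (lvl (Ab_sT K) n)"
  obtain c where c: "c \<in> carrier (ZX_lvl K n)" "x = Nsub K n #>\<^bsub>ZX_lvl K n\<^esub> c"
    using x by (rule Ab_carrierE)
  show "gmap n x \<in> carrier (lvl A n)" using c by (simp add: g_coset fb_c)
next
  fix n i x assume i: "i \<le> Suc n" and x: "x \<in> carrier (lvl (Ab_sT K) (Suc n))"
  obtain c where c: "c \<in> carrier (ZX_lvl K (Suc n))" "x = Nsub K (Suc n) #>\<^bsub>ZX_lvl K (Suc n)\<^esub> c"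
    using x by (rule Ab_carrierE)
  show "gmap n (sface (Ab_sT K) n i x) = sface A n i (gmap (Suc n) x)"
    using c i by (simp add: g_coset face_coset lin_face_c fb_face)
next
  fix n i x assume i: "i \<le> n" and x: "x \<in> carrier (lvl (Ab_sT K) n)"
  obtain c where c: "c \<in> carrier (ZX_lvl K n)" "x = Nsub K n #>\<^bsub>ZX_lvl K n\<^esub> c"
    using x by (rule Ab_carrierE)
  show "gmap (Suc n) (sdegen (Ab_sT K) n i x) = sdegen A n i (gmap n x)"
    using c i by (simp add: g_coset degen_coset lin_degen_c fb_degen)
next
  fix n
  show "gmap n \<in> hom (lvl (Ab_sT K) n) (lvl A n)"
  proof (rule homI)
    fix x assume x: "x \<in> carrier (lvl (Ab_sT K) n)"
    obtain c where c: "c \<in> carrier (ZX_lvl K n)" "x = Nsub K n #>\<^bsub>ZX_lvl K n\<^esub> c"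
      using x by (rule Ab_carrierE)
    show "gmap n x \<in> carrier (lvl A n)" using c by (simp add: g_coset fb_c)
  next
    fix x y assume "x \<in> carrier (lvl (Ab_sT K) n)" "y \<in> carrier (lvl (Ab_sT K) n)"
    then obtain a b where a: "a \<in> carrier (ZX_lvl K n)" "x = Nsub K n #>\<^bsub>ZX_lvl K n\<^esub> a"
      and b: "b \<in> carrier (ZX_lvl K n)" "y = Nsub K n #>\<^bsub>ZX_lvl K n\<^esub> b"
      by (metis Ab_carrierE)
    have ab: "a \<otimes>\<^bsub>ZX_lvl K n\<^esub> b \<in> carrier (ZX_lvl K n)"
      using a b monoid.m_closed[OF group.is_monoid[OF Z_grp']] by blast
    show "gmap n (x \<otimes>\<^bsub>lvl (Ab_sT K) n\<^esub> y) = gmap n x \<otimes>\<^bsub>lvl A n\<^esub> gmap n y"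
      unfolding a(2) b(2) Ab_mult[OF a(1) b(1)] g_coset[OF ab] g_coset[OF a(1)] g_coset[OF b(1)]
      by (rule fb_mult[OF a(1) b(1)])
  qed
qed

lemma g_unit: "x \<in> simp K n \<Longrightarrow> gmap n (ab_unit K n x) = f n x"
  unfolding ab_unit_def by (simp add: g_coset eta_c fb_eta)

lemma g_unique:
  assumes g': "sAb_hom (Ab_sT K) A g'" and agree: "\<forall>n. \<forall>x \<in> simp K n. g' n (ab_unit K n x) = f n x"
    and y: "y \<in> carrier (lvl (Ab_sT K) n)"
  shows "g' n y = gmap n y"
proof -
  obtain c where c: "c \<in> carrier (ZX_lvl K n)" "y = Nsub K n #>\<^bsub>ZX_lvl K n\<^esub> c"
    using y by (rule Ab_carrierE)
  have q: "(\<lambda>a. Nsub K n #>\<^bsub>ZX_lvl K n\<^esub> a) \<in> hom (ZX_lvl K n) (lvl (Ab_sT K) n)"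
    using normal.r_coset_hom_Mod[OF N_normal] by (simp add: Ab_sT_def)
  have gh: "g' n \<in> hom (lvl (Ab_sT K) n) (lvl A n)" using g' unfolding sAb_hom_def by blast
  have "g' n (Nsub K n #>\<^bsub>ZX_lvl K n\<^esub> c) = fbar A f n c"
  proof (rule gen_eq[OF A.grp' hom_comp[OF q gh] fb_hom _ c(1)])
    fix x assume "x \<in> simp K n"
    then show "g' n (Nsub K n #>\<^bsub>ZX_lvl K n\<^esub> eta x) = fbar A f n (eta x)"
      using agree fb_eta unfolding ab_unit_def by simp
  qed
  then show ?thesis using c g_coset by simp
qed

end

theorem mainTheorem4:
  fixes K :: "'a tcx" and A :: "'c sab"
  assumes "is_sTCom K" and "is_sAbGrp A"
  shows "is_sAbGrp (Ab_sT K) \<and> sTCom_hom K (U_sT (Ab_sT K)) (ab_unit K) \<and>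
    (\<forall>f. sTCom_hom K (U_sT A) f \<longrightarrow>
      (\<exists>g. sAb_hom (Ab_sT K) A g \<and> (\<forall>n. \<forall>x \<in> simp K n. g n (ab_unit K n x) = f n x) \<and>
        (\<forall>g'. sAb_hom (Ab_sT K) A g' \<and> (\<forall>n. \<forall>x \<in> simp K n. g' n (ab_unit K n x) = f n x) \<longrightarrow>
           (\<forall>n. \<forall>y \<in> carrier (lvl (Ab_sT K) n). g' n y = g n y))))"
proof -
  interpret sT K by (rule sT.intro, rule assms(1))
  show ?thesis
  proof (intro conjI allI impI)
    show "is_sAbGrp (Ab_sT K)" by (rule Ab_sAb)
    show "sTCom_hom K (U_sT (Ab_sT K)) (ab_unit K)" by (rule unit_hom)
  next
    fix f assume fh: "sTCom_hom K (U_sT A) f"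
    interpret U: univ K A f
      using assms fh by (simp add: univ_def univ_axioms_def sT_def sAG_def)
    show "\<exists>g. sAb_hom (Ab_sT K) A g \<and> (\<forall>n. \<forall>x \<in> simp K n. g n (ab_unit K n x) = f n x) \<and>
        (\<forall>g'. sAb_hom (Ab_sT K) A g' \<and> (\<forall>n. \<forall>x \<in> simp K n. g' n (ab_unit K n x) = f n x) \<longrightarrow>
           (\<forall>n. \<forall>y \<in> carrier (lvl (Ab_sT K) n). g' n y = g n y))"
    proof (rule exI[of _ U.gmap], intro conjI allI impI ballI)
      show "sAb_hom (Ab_sT K) A U.gmap" by (rule U.g_hom)
      fix n x assume "x \<in> simp K n"
      then show "U.gmap n (ab_unit K n x) = f n x" by (rule U.g_unit)
    next
      fix g' n y
      assume h: "sAb_hom (Ab_sT K) A g' \<and> (\<forall>n. \<forall>x \<in> simp K n. g' n (ab_unit K n x) = f n x)"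
        and y: "y \<in> carrier (lvl (Ab_sT K) n)"
      show "g' n y = U.gmap n y"
        using U.g_unique[OF conjunct1[OF h] conjunct2[OF h] y] .
    qed
  qed
qed

end
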